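(* There is a computable equivalence structure that is computably bi-embeddably categorical but not computably categorical.
   Context: An equivalence structure $\mathcal{A}=(A,E)$ has universe $A\subseteq\omega$ and an equivalence relation $E$ on $A$; it is computable if its atomic diagram is computable. Two structures are bi-embeddable if each embeds into the other. A computable structure $\mathcal{A}$ is computably bi-embeddably categorical if every computable structure bi-embeddable with $\mathcal{A}$ is bi-embeddable with $\mathcal{A}$ via computable embeddings in both directions. A computable structure $\mathcal{A}$ is computably categorical if for every computable structure $\mathcal{B}$ isomorphic to $\mathcal{A}$ there is a computable isomorphism from $\mathcal{B}$ to $\mathcal{A}$. *)

theory Defs
  imports Main
begin

datatype recf =
    Zero
  | Succ
  | Proj nat
  | Comp recf "recf list"
  | Prec recf recf
  | Mn recf

inductive eval :: "recf \<Rightarrow> nat list \<Rightarrow> nat \<Rightarrow> bool" where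
  eval_Zero: "eval Zero xs 0"
| eval_Succ: "eval Succ (x # xs) (Suc x)"
| eval_Proj: "i < length xs \<Longrightarrow> eval (Proj i) xs (xs ! i)"
| eval_Comp: "list_all2 (\<lambda>g y. eval g xs y) gs ys \<Longrightarrow> eval f ys z \<Longrightarrow> eval (Comp f gs) xs z"
| eval_Prec0: "eval f xs y \<Longrightarrow> eval (Prec f g) (0 # xs) y"
| eval_PrecS: "eval (Prec f g) (n # xs) y \<Longrightarrow> eval g (y # n # xs) z
      \<Longrightarrow> eval (Prec f g) (Suc n # xs) z"
| eval_Mn: "eval f (n # xs) 0 \<Longrightarrow> (\<forall>m<n. \<exists>k. eval f (m # xs) (Suc k))
      \<Longrightarrow> eval (Mn f) xs n"

definition computable_fun :: "(nat \<Rightarrow> nat) \<Rightarrow> bool" where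
  "computable_fun f \<longleftrightarrow> (\<exists>c. \<forall>x. eval c [x] (f x))"

definition computable_set :: "nat set \<Rightarrow> bool" where
  "computable_set A \<longleftrightarrow> (\<exists>c. \<forall>x. eval c [x] (if x \<in> A then 1 else 0))"

definition computable_rel :: "(nat \<times> nat) set \<Rightarrow> bool" where
  "computable_rel R \<longleftrightarrow> (\<exists>c. \<forall>x y. eval c [x, y] (if (x, y) \<in> R then 1 else 0))"

definition eq_struct :: "nat set \<Rightarrow> (nat \<times> nat) set \<Rightarrow> bool" where
  "eq_struct A E \<longleftrightarrow> equiv A E"

text \<open>Computable: atomic diagram computable, i.e. universe and relation computable
  (equality on \<open>\<omega>\<close> is trivially decidable).\<close>
definition computable_eq_struct :: "nat set \<Rightarrow> (nat \<times> nat) set \<Rightarrow> bool" where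
  "computable_eq_struct A E \<longleftrightarrow> eq_struct A E \<and> computable_set A \<and> computable_rel E"

definition embedding :: "(nat \<Rightarrow> nat) \<Rightarrow> nat set \<Rightarrow> (nat \<times> nat) set
    \<Rightarrow> nat set \<Rightarrow> (nat \<times> nat) set \<Rightarrow> bool" where
  "embedding f A E B F \<longleftrightarrow> f ` A \<subseteq> B \<and> inj_on f A \<and>
     (\<forall>x\<in>A. \<forall>y\<in>A. (x, y) \<in> E \<longleftrightarrow> (f x, f y) \<in> F)"

definition isomorphism :: "(nat \<Rightarrow> nat) \<Rightarrow> nat set \<Rightarrow> (nat \<times> nat) set
    \<Rightarrow> nat set \<Rightarrow> (nat \<times> nat) set \<Rightarrow> bool" where
  "isomorphism f A E B F \<longleftrightarrow> embedding f A E B F \<and> f ` A = B"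

definition bi_embeddable :: "nat set \<Rightarrow> (nat \<times> nat) set \<Rightarrow> nat set \<Rightarrow> (nat \<times> nat) set \<Rightarrow> bool" where
  "bi_embeddable A E B F \<longleftrightarrow> (\<exists>f. embedding f A E B F) \<and> (\<exists>g. embedding g B F A E)"

definition comp_bi_embeddable :: "nat set \<Rightarrow> (nat \<times> nat) set \<Rightarrow> nat set \<Rightarrow> (nat \<times> nat) set \<Rightarrow> bool" where
  "comp_bi_embeddable A E B F \<longleftrightarrow>
     (\<exists>f. computable_fun f \<and> embedding f A E B F) \<and>
     (\<exists>g. computable_fun g \<and> embedding g B F A E)"

definition isomorphic :: "nat set \<Rightarrow> (nat \<times> nat) set \<Rightarrow> nat set \<Rightarrow> (nat \<times> nat) set \<Rightarrow> bool" where
  "isomorphic A E B F \<longleftrightarrow> (\<exists>f. isomorphism f A E B F)"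

definition comp_bi_emb_categorical :: "nat set \<Rightarrow> (nat \<times> nat) set \<Rightarrow> bool" where
  "comp_bi_emb_categorical A E \<longleftrightarrow>
     (\<forall>B F. computable_eq_struct B F \<longrightarrow> bi_embeddable A E B F \<longrightarrow> comp_bi_embeddable A E B F)"

definition comp_categorical :: "nat set \<Rightarrow> (nat \<times> nat) set \<Rightarrow> bool" where
  "comp_categorical A E \<longleftrightarrow>
     (\<forall>B F. computable_eq_struct B F \<longrightarrow> isomorphic A E B F \<longrightarrow>
        (\<exists>h. computable_fun h \<and> isomorphism h B F A E))"

end

theory Submission
  imports Defs "HOL-Library.Nat_Bijection" "HOL-Library.Infinite_Set"
begin

inductive_cases evalZeroE: "eval Zero xs y"
inductive_cases evalSuccE: "eval Succ xs y"
inductive_cases evalProjE: "eval (Proj i) xs y"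
inductive_cases evalCompE: "eval (Comp f gs) xs y"
inductive_cases evalPrecE: "eval (Prec f g) xs y"
inductive_cases evalMnE: "eval (Mn f) xs y"

lemma eval_det: "eval c xs y \<Longrightarrow> eval c xs y' \<Longrightarrow> y = y'"
proof (induction arbitrary: y' rule: eval.induct)
  case (eval_Zero xs)
  then show ?case by (cases rule: evalZeroE) auto
next
  case (eval_Succ x xs)
  then show ?case by (cases rule: evalSuccE) auto
next
  case (eval_Proj i xs)
  then show ?case by (cases rule: evalProjE) auto
next
  case (eval_Comp xs gs ys f z)
  from eval_Comp.prems obtain ys' where a: "list_all2 (\<lambda>g y. eval g xs y) gs ys'" and b: "eval f ys' y'"
    by (cases rule: evalCompE) auto
  have "ys = ys'"
    using eval_Comp.IH(1) a
  proof (induction gs arbitrary: ys ys')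
    case Nil then show ?case by simp
  next
    case (Cons g gs)
    then show ?case by (auto simp: list_all2_Cons1)
  qed
  then show ?case using eval_Comp.IH(2) b by simp
next
  case (eval_Prec0 f xs y g)
  from eval_Prec0.prems show ?case by (cases rule: evalPrecE) (use eval_Prec0.IH in auto)
next
  case (eval_PrecS f g n xs y z)
  from eval_PrecS.prems obtain y0 where a: "eval (Prec f g) (n # xs) y0" and b: "eval g (y0 # n # xs) y'"
    by (cases rule: evalPrecE) auto
  from eval_PrecS.IH(1)[OF a] have "y = y0" .
  with eval_PrecS.IH(2) b show ?case by blast
next
  case (eval_Mn f n xs)
  from eval_Mn.prems obtain n' where y': "y' = n'" and a: "eval f (n' # xs) 0"
    and b: "\<forall>m<n'. \<exists>k. eval f (m # xs) (Suc k)" by (cases rule: evalMnE) auto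
  show ?case
  proof (rule ccontr)
    assume "n \<noteq> y'"
    then consider "n < n'" | "n' < n" using y' by linarith
    then show False
    proof cases
      case 1
      then obtain k where "eval f (n # xs) (Suc k)" using b by blast
      then have "0 = Suc k" using eval_Mn.IH(1) by blast
      then show False by simp
    next
      case 2
      then obtain k where "eval f (n' # xs) (Suc k)" and "\<forall>y'. eval f (n' # xs) y' \<longrightarrow> Suc k = y'"
        using eval_Mn.IH(2) by blast
      then show False using a by blast
    qed
  qed
qed

section \<open>Computability of n-ary functions\<close>

definition rc :: "nat \<Rightarrow> (nat list \<Rightarrow> nat) \<Rightarrow> bool" where
  "rc n f \<longleftrightarrow> (\<exists>c. \<forall>xs. length xs = n \<longrightarrow> eval c xs (f xs))"

datatype ex = V nat | K nat | Pl ex ex | Mi ex ex | Ti ex ex | Su ex ex | It ex ex ex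
  | Fn "nat list \<Rightarrow> nat" "ex list"

fun evx :: "nat list \<Rightarrow> ex \<Rightarrow> nat" where
  "evx env (V i) = (if i < length env then env ! i else 0)"
| "evx env (K k) = k"
| "evx env (Pl a b) = evx env a + evx env b"
| "evx env (Mi a b) = evx env a - evx env b"
| "evx env (Ti a b) = evx env a * evx env b"
| "evx env (Su b body) = (\<Sum>i<evx env b. evx (i # env) body)"
| "evx env (It body cnt x) = ((\<lambda>v. evx (v # env) body) ^^ (evx env cnt)) (evx env x)"
| "evx env (Fn f args) = f (map (evx env) args)"

fun wfx :: "ex \<Rightarrow> bool" where
  "wfx (V i) = True"
| "wfx (K k) = True"
| "wfx (Pl a b) = (wfx a \<and> wfx b)"
| "wfx (Mi a b) = (wfx a \<and> wfx b)"
| "wfx (Ti a b) = (wfx a \<and> wfx b)"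
| "wfx (Su b body) = (wfx b \<and> wfx body)"
| "wfx (It body cnt x) = (wfx body \<and> wfx cnt \<and> wfx x)"
| "wfx (Fn f args) = (rc (length args) f \<and> (\<forall>a\<in>set args. wfx a))"

fun kc :: "nat \<Rightarrow> recf" where
  "kc 0 = Zero"
| "kc (Suc k) = Comp Succ [kc k]"

lemma eval_kc: "eval (kc k) xs k"
  by (induction k) (auto intro!: eval.intros)

definition addc :: recf where "addc = Prec (Proj 0) (Comp Succ [Proj 0])"
definition predc :: recf where "predc = Prec Zero (Proj 1)"
definition subc :: recf where "subc = Prec (Proj 0) (Comp predc [Proj 0])"
definition mulc :: recf where "mulc = Prec Zero (Comp addc [Proj 0, Proj 2])"

lemma eval_addc: "eval addc [a, b] (a + b)"
proof (induction a)
  case 0 then show ?case unfolding addc_def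
    using eval_Prec0[of "Proj 0" "[b]" b] eval_Proj[of 0 "[b]"] by simp
next
  case (Suc a)
  have "eval (Comp Succ [Proj 0]) [a + b, a, b] (Suc (a + b))"
    by (rule eval_Comp[where ys="[a+b]"]) (auto intro: eval.intros eval_Proj[of 0 "[a+b,a,b]", simplified])
  then show ?case using Suc unfolding addc_def by (auto intro: eval_PrecS)
qed

lemma eval_predc: "eval predc [n] (n - 1)"
proof (induction n)
  case 0 then show ?case unfolding predc_def by (auto intro: eval.intros)
next
  case (Suc m)
  moreover have "eval (Proj 1) [m - 1, m] m" using eval_Proj[of 1 "[m - 1, m]"] by simp
  ultimately show ?case unfolding predc_def by (auto intro: eval_PrecS)
qed

lemma eval_subc: "eval subc [b, a] (a - b)"
proof (induction b)
  case 0 then show ?case unfolding subc_def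
    using eval_Prec0[of "Proj 0" "[a]" a] eval_Proj[of 0 "[a]"] by simp
next
  case (Suc b)
  have "eval (Comp predc [Proj 0]) [a - b, b, a] (a - Suc b)"
    by (rule eval_Comp[where ys="[a-b]"]) (auto intro: eval_predc[of "a - b", simplified] eval_Proj[of 0 "[a-b,b,a]", simplified])
  then show ?case using Suc unfolding subc_def by (auto intro: eval_PrecS)
qed

lemma eval_mulc: "eval mulc [a, b] (a * b)"
proof (induction a)
  case 0 then show ?case unfolding mulc_def by (auto intro: eval.intros)
next
  case (Suc a)
  have "eval (Comp addc [Proj 0, Proj 2]) [a * b, a, b] (a * b + b)"
    by (rule eval_Comp[where ys="[a*b, b]"])
       (auto intro: eval_addc eval_Proj[of 0 "[a*b,a,b]", simplified] eval_Proj[of 2 "[a*b,a,b]", simplified])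
  then show ?case using Suc unfolding mulc_def by (auto intro: eval_PrecS simp: add.commute)
qed

definition projs :: "nat \<Rightarrow> nat \<Rightarrow> recf list" where
  "projs k n = map (\<lambda>j. Proj (j + k)) [0..<n]"

lemma eval_projs: "k + n \<le> length xs \<Longrightarrow>
  list_all2 (\<lambda>g y. eval g xs y) (projs k n) (take n (drop k xs))"
  unfolding projs_def
  by (auto simp: list_all2_conv_all_nth add.commute intro: eval_Proj[of _ xs, simplified])

fun cx :: "nat \<Rightarrow> ex \<Rightarrow> recf" where
  "cx n (V i) = (if i < n then Proj i else Zero)"
| "cx n (K k) = kc k"
| "cx n (Pl a b) = Comp addc [cx n a, cx n b]"
| "cx n (Mi a b) = Comp subc [cx n b, cx n a]"
| "cx n (Ti a b) = Comp mulc [cx n a, cx n b]"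
| "cx n (Su b body) = Comp (Prec Zero (Comp addc [Proj 0, Comp (cx (Suc n) body) (projs 1 (Suc n))]))
      (cx n b # projs 0 n)"
| "cx n (It body cnt x) = Comp (Prec (Proj 0) (Comp (cx (Suc n) body) (Proj 0 # projs 3 n)))
      (cx n cnt # cx n x # projs 0 n)"
| "cx n (Fn f args) = Comp (SOME c. \<forall>xs. length xs = length args \<longrightarrow> eval c xs (f xs)) (map (cx n) args)"

lemma cx_correct: "wfx e \<Longrightarrow> length env = n \<Longrightarrow> eval (cx n e) env (evx env e)"
proof (induction e arbitrary: n env)
  case (V i)
  then show ?case by (auto intro: eval.intros)
next
  case (K k)
  then show ?case by (simp add: eval_kc)
next
  case (Pl a b)
  then show ?case by (auto intro!: eval_Comp[where ys="[evx env a, evx env b]"] eval_addc)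
next
  case (Mi a b)
  then show ?case by (auto intro!: eval_Comp[where ys="[evx env b, evx env a]"] eval_subc)
next
  case (Ti a b)
  then show ?case by (auto intro!: eval_Comp[where ys="[evx env a, evx env b]"] eval_mulc)
next
  case (Su b body)
  let ?P = "Prec Zero (Comp addc [Proj 0, Comp (cx (Suc n) body) (projs 1 (Suc n))])"
  have P: "eval ?P (m # env) (\<Sum>i<m. evx (i # env) body)" for m
  proof (induction m)
    case 0 then show ?case by (auto intro: eval.intros)
  next
    case (Suc m)
    let ?s = "\<Sum>i<m. evx (i # env) body"
    have "eval (Comp (cx (Suc n) body) (projs 1 (Suc n))) (?s # m # env) (evx (m # env) body)"
      apply (rule eval_Comp[where ys="m # env"])
      using eval_projs[of 1 "Suc n" "?s # m # env"] Su.IH(2)[of "m # env" "Suc n"] Su.prems by auto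
    then have "eval (Comp addc [Proj 0, Comp (cx (Suc n) body) (projs 1 (Suc n))]) (?s # m # env)
       (?s + evx (m # env) body)"
      by (auto intro!: eval_Comp[where ys="[?s, evx (m # env) body]"] eval_addc
          intro: eval_Proj[of 0 "?s # m # env", simplified])
    then show ?case using Suc by (auto intro: eval_PrecS)
  qed
  show ?case
    apply simp
    apply (rule eval_Comp[where ys="evx env b # env"])
    using Su eval_projs[of 0 n env] P by auto
next
  case (It body cnt x)
  let ?f = "\<lambda>v. evx (v # env) body"
  let ?P = "Prec (Proj 0) (Comp (cx (Suc n) body) (Proj 0 # projs 3 n))"
  have P: "eval ?P (m # x0 # env) ((?f ^^ m) x0)" for m x0
  proof (induction m)
    case 0 then show ?case using eval_Prec0[of "Proj 0" "x0 # env" x0] eval_Proj[of 0 "x0 # env"] by simp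
  next
    case (Suc m)
    let ?s = "(?f ^^ m) x0"
    have "eval (Comp (cx (Suc n) body) (Proj 0 # projs 3 n)) (?s # m # x0 # env) (?f ?s)"
      apply (rule eval_Comp[where ys="?s # env"])
      using eval_projs[of 3 n "?s # m # x0 # env"] It.IH(1)[of "?s # env" "Suc n"] It.prems eval_Proj[of 0 "?s # m # x0 # env"] by auto
    then show ?case using Suc by (auto intro: eval_PrecS)
  qed
  show ?case
    apply simp
    apply (rule eval_Comp[where ys="evx env cnt # evx env x # env"])
    using It eval_projs[of 0 n env] P by auto
next
  case (Fn f args)
  let ?c = "SOME c. \<forall>xs. length xs = length args \<longrightarrow> eval c xs (f xs)"
  have "\<forall>xs. length xs = length args \<longrightarrow> eval ?c xs (f xs)"
  proof -
    have "rc (length args) f" using Fn.prems(1) by simp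
    then obtain c where "\<forall>xs. length xs = length args \<longrightarrow> eval c xs (f xs)" unfolding rc_def by blast
    then show ?thesis by (rule someI)
  qed
  moreover have "list_all2 (\<lambda>g y. eval g env y) (map (cx n) args) (map (evx env) args)"
    using Fn by (auto simp: list_all2_conv_all_nth)
  ultimately show ?case by (auto intro: eval_Comp)
qed

lemma rc_by_ex: "wfx e \<Longrightarrow> (\<And>xs. length xs = n \<Longrightarrow> evx xs e = f xs) \<Longrightarrow> rc n f"
  unfolding rc_def using cx_correct by metis


definition sg :: "ex \<Rightarrow> ex" where "sg a = Mi (K 1) (Mi (K 1) a)"
definition nt :: "ex \<Rightarrow> ex" where "nt a = Mi (K 1) a"
definition eqx :: "ex \<Rightarrow> ex \<Rightarrow> ex" where "eqx a b = nt (Pl (Mi a b) (Mi b a))"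
definition ltx :: "ex \<Rightarrow> ex \<Rightarrow> ex" where "ltx a b = sg (Mi b a)"
definition andx :: "ex \<Rightarrow> ex \<Rightarrow> ex" where "andx a b = sg (Ti a b)"
definition orx :: "ex \<Rightarrow> ex \<Rightarrow> ex" where "orx a b = sg (Pl a b)"
definition exx :: "ex \<Rightarrow> ex \<Rightarrow> ex" where "exx b body = sg (Su b body)"
definition allx :: "ex \<Rightarrow> ex \<Rightarrow> ex" where "allx b body = nt (Su b (nt body))"
definition ifx :: "ex \<Rightarrow> ex \<Rightarrow> ex \<Rightarrow> ex" where "ifx c a b = Pl (Ti (nt c) a) (Ti (sg c) b)"

lemma wfx_derived[simp]:
  "wfx (sg a) = wfx a" "wfx (nt a) = wfx a" "wfx (eqx a b) = (wfx a \<and> wfx b)"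
  "wfx (ltx a b) = (wfx a \<and> wfx b)" "wfx (andx a b) = (wfx a \<and> wfx b)"
  "wfx (orx a b) = (wfx a \<and> wfx b)" "wfx (exx a b) = (wfx a \<and> wfx b)"
  "wfx (allx a b) = (wfx a \<and> wfx b)" "wfx (ifx c a b) = (wfx c \<and> wfx a \<and> wfx b)"
  by (auto simp: sg_def nt_def eqx_def ltx_def andx_def orx_def exx_def allx_def ifx_def)

lemma evx_sg[simp]: "evx env (sg a) = of_bool (evx env a \<noteq> 0)"
  by (simp add: sg_def)
lemma evx_nt[simp]: "evx env (nt a) = of_bool (evx env a = 0)"
  by (simp add: nt_def)
lemma evx_eqx[simp]: "evx env (eqx a b) = of_bool (evx env a = evx env b)"
  by (auto simp: eqx_def)
lemma evx_ltx[simp]: "evx env (ltx a b) = of_bool (evx env a < evx env b)"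
  by (auto simp: ltx_def)
lemma evx_andx[simp]: "evx env (andx a b) = of_bool (evx env a \<noteq> 0 \<and> evx env b \<noteq> 0)"
  by (auto simp: andx_def)
lemma evx_orx[simp]: "evx env (orx a b) = of_bool (evx env a \<noteq> 0 \<or> evx env b \<noteq> 0)"
  by (auto simp: orx_def)
lemma evx_exx[simp]: "evx env (exx b body) = of_bool (\<exists>i<evx env b. evx (i # env) body \<noteq> 0)"
  by (auto simp: exx_def)
lemma evx_allx[simp]: "evx env (allx b body) = of_bool (\<forall>i<evx env b. evx (i # env) body \<noteq> 0)"
  by (auto simp: allx_def)
lemma evx_ifx[simp]: "evx env (ifx c a b) = (if evx env c = 0 then evx env a else evx env b)"
  by (auto simp: ifx_def)

lemma rc1I: "wfx e \<Longrightarrow> (\<And>a. evx [a] e = f [a]) \<Longrightarrow> rc (Suc 0) f"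
  by (rule rc_by_ex[where e=e]) (auto simp: length_Suc_conv)
lemma rc2I: "wfx e \<Longrightarrow> (\<And>a b. evx [a, b] e = f [a, b]) \<Longrightarrow> rc (Suc (Suc 0)) f"
  by (rule rc_by_ex[where e=e]) (auto simp: length_Suc_conv numeral_eq_Suc)
lemma rc3I: "wfx e \<Longrightarrow> (\<And>a b c. evx [a, b, c] e = f [a, b, c]) \<Longrightarrow> rc (Suc (Suc (Suc 0))) f"
  by (rule rc_by_ex[where e=e]) (auto simp: length_Suc_conv numeral_eq_Suc)
lemma rc4I: "wfx e \<Longrightarrow> (\<And>a b c d. evx [a, b, c, d] e = f [a, b, c, d]) \<Longrightarrow> rc (Suc (Suc (Suc (Suc 0)))) f"
  by (rule rc_by_ex[where e=e]) (auto simp: length_Suc_conv numeral_eq_Suc)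
lemma rc5I: "wfx e \<Longrightarrow> (\<And>a b c d g. evx [a, b, c, d, g] e = f [a, b, c, d, g]) \<Longrightarrow> rc (Suc (Suc (Suc (Suc (Suc 0))))) f"
  by (rule rc_by_ex[where e=e]) (auto simp: length_Suc_conv numeral_eq_Suc)
lemma rc6I: "wfx e \<Longrightarrow> (\<And>a b c d g h. evx [a, b, c, d, g, h] e = f [a, b, c, d, g, h]) \<Longrightarrow> rc (Suc (Suc (Suc (Suc (Suc (Suc 0)))))) f"
  by (rule rc_by_ex[where e=e]) (auto simp: length_Suc_conv numeral_eq_Suc)

definition pe :: "nat \<Rightarrow> nat \<Rightarrow> nat" where "pe x y = prod_encode (x, y)"
definition p1 :: "nat \<Rightarrow> nat" where "p1 z = fst (prod_decode z)"
definition p2 :: "nat \<Rightarrow> nat" where "p2 z = snd (prod_decode z)"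

lemma p1_pe[simp]: "p1 (pe x y) = x" by (simp add: p1_def pe_def)
lemma p2_pe[simp]: "p2 (pe x y) = y" by (simp add: p2_def pe_def)
lemma pe_p[simp]: "pe (p1 z) (p2 z) = z" by (simp add: p1_def p2_def pe_def)
lemma pe_eq[simp]: "pe a b = pe c d \<longleftrightarrow> a = c \<and> b = d" by (simp add: pe_def)
lemma pe_ge1: "a \<le> pe a b" by (simp add: pe_def le_prod_encode_1)
lemma pe_ge2: "b \<le> pe a b" by (simp add: pe_def le_prod_encode_2)
lemma p1_le: "p1 z \<le> z" by (metis pe_ge1 pe_p)
lemma p2_le: "p2 z \<le> z" by (metis pe_ge2 pe_p)

lemma sum_triangle: "(\<Sum>i<Suc n. i) = triangle n"
  by (induction n) auto

definition pex :: "ex \<Rightarrow> ex \<Rightarrow> ex" where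
  "pex a b = Pl (Su (Pl (Pl a b) (K 1)) (V 0)) a"

lemma wfx_pex[simp]: "wfx (pex a b) = (wfx a \<and> wfx b)" by (auto simp: pex_def)
lemma evx_pex[simp]: "evx env (pex a b) = pe (evx env a) (evx env b)"
  by (simp add: pex_def pe_def prod_encode_def sum_triangle[simplified])

lemma sum_pair_delta:
  "(\<Sum>x<Suc z. \<Sum>y<Suc z. of_bool (pe x y = z) * g x y) = (g (p1 z) (p2 z) :: nat)"
proof -
  have a: "p1 z < Suc z" "p2 z < Suc z" using p1_le[of z] p2_le[of z] by auto
  have eq: "pe x y = z \<longleftrightarrow> x = p1 z \<and> y = p2 z" for x y by (metis p1_pe p2_pe pe_p)
  have "(\<Sum>x<Suc z. \<Sum>y<Suc z. of_bool (pe x y = z) * g x y)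
      = (\<Sum>x<Suc z. if x = p1 z then (\<Sum>y<Suc z. if y = p2 z then g x y else 0) else 0)"
    by (rule sum.cong) (auto simp: eq intro!: sum.neutral)
  also have "\<dots> = g (p1 z) (p2 z)" using a by (simp add: sum.delta')
  finally show ?thesis .
qed

definition p1e :: ex where
  "p1e = Su (Pl (V 0) (K 1)) (Su (Pl (V 1) (K 1)) (Ti (eqx (pex (V 1) (V 0)) (V 2)) (V 1)))"
definition p2e :: ex where
  "p2e = Su (Pl (V 0) (K 1)) (Su (Pl (V 1) (K 1)) (Ti (eqx (pex (V 1) (V 0)) (V 2)) (V 0)))"

lemma rc_p1: "rc (Suc 0) (\<lambda>xs. p1 (xs ! 0))"
proof (rule rc1I[where e=p1e])
  show "wfx p1e" by (simp add: p1e_def)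
  fix z
  have "evx [z] p1e = (\<Sum>x<Suc z. \<Sum>y<Suc z. of_bool (pe x y = z) * (\<lambda>x y. x) x y)"
    by (simp add: p1e_def)
  also have "\<dots> = p1 z" by (rule sum_pair_delta)
  finally show "evx [z] p1e = p1 ([z] ! 0)" by simp
qed

lemma rc_p2: "rc (Suc 0) (\<lambda>xs. p2 (xs ! 0))"
proof (rule rc1I[where e=p2e])
  show "wfx p2e" by (simp add: p2e_def)
  fix z
  have "evx [z] p2e = (\<Sum>x<Suc z. \<Sum>y<Suc z. of_bool (pe x y = z) * (\<lambda>x y. y) x y)"
    by (simp add: p2e_def)
  also have "\<dots> = p2 z" by (rule sum_pair_delta)
  finally show "evx [z] p2e = p2 ([z] ! 0)" by simp
qed

definition P1x :: "ex \<Rightarrow> ex" where "P1x a = Fn (\<lambda>xs. p1 (xs ! 0)) [a]"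
definition P2x :: "ex \<Rightarrow> ex" where "P2x a = Fn (\<lambda>xs. p2 (xs ! 0)) [a]"

lemma wfx_P[simp]: "wfx (P1x a) = wfx a" "wfx (P2x a) = wfx a"
  by (auto simp: P1x_def P2x_def rc_p1 rc_p2)
lemma evx_P[simp]: "evx env (P1x a) = p1 (evx env a)" "evx env (P2x a) = p2 (evx env a)"
  by (auto simp: P1x_def P2x_def)

definition cons :: "nat \<Rightarrow> nat \<Rightarrow> nat" where "cons x l = Suc (pe x l)"
definition hdn :: "nat \<Rightarrow> nat" where "hdn l = p1 (l - 1)"
definition tln :: "nat \<Rightarrow> nat" where "tln l = p2 (l - 1)"

lemma hdn_cons[simp]: "hdn (cons x l) = x" by (simp add: hdn_def cons_def)
lemma tln_cons[simp]: "tln (cons x l) = l" by (simp add: tln_def cons_def)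
lemma cons_nz[simp]: "cons x l \<noteq> 0" by (simp add: cons_def)
lemma cons_hd_tl: "l \<noteq> 0 \<Longrightarrow> cons (hdn l) (tln l) = l"
  by (simp add: cons_def hdn_def tln_def)
lemma tln_less: "l \<noteq> 0 \<Longrightarrow> tln l < l"
  using p2_le[of "l - 1"] by (simp add: tln_def)
lemma tln_0[simp]: "tln 0 = 0"
  using p2_le[of 0] by (simp add: tln_def)
lemma cons_gt2: "l < cons x l" using pe_ge2[of l x] by (simp add: cons_def)
lemma cons_gt1: "x < cons x l" using pe_ge1[of x l] by (simp add: cons_def)
lemma cons_eq[simp]: "cons a b = cons c d \<longleftrightarrow> a = c \<and> b = d" by (simp add: cons_def)

primrec enc :: "nat list \<Rightarrow> nat" where
  "enc [] = 0"
| "enc (x # xs) = cons x (enc xs)"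

function dec :: "nat \<Rightarrow> nat list" where
  "dec n = (if n = 0 then [] else hdn n # dec (tln n))"
  by pat_completeness auto
termination by (relation "measure id") (auto simp: tln_less)
declare dec.simps[simp del]

lemma dec_0[simp]: "dec 0 = []" by (simp add: dec.simps)
lemma dec_cons[simp]: "dec (cons x l) = x # dec l" by (subst dec.simps) simp
lemma dec_enc[simp]: "dec (enc l) = l" by (induction l) auto
lemma enc_dec[simp]: "enc (dec n) = n"
  by (induction n rule: dec.induct) (subst dec.simps, auto simp: cons_hd_tl)
lemma enc_inj[simp]: "enc a = enc b \<longleftrightarrow> a = b" by (metis dec_enc)
lemma length_le_enc: "length l \<le> enc l"
  by (induction l) (auto simp: Suc_le_eq intro: le_less_trans cons_gt2)

definition tlpow :: "nat \<Rightarrow> nat \<Rightarrow> nat" where "tlpow l i = (tln ^^ i) l"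
definition nthn :: "nat \<Rightarrow> nat \<Rightarrow> nat" where "nthn l i = hdn (tlpow l i)"
definition lenn :: "nat \<Rightarrow> nat" where "lenn l = (\<Sum>i<l. of_bool (tlpow l i \<noteq> 0))"

lemma tlpow_0: "(tln ^^ i) 0 = 0" by (induction i) auto

lemma tlpow_enc: "tlpow (enc L) i = enc (drop i L)"
  unfolding tlpow_def
proof (induction L arbitrary: i)
  case Nil then show ?case by (simp add: tlpow_0)
next
  case (Cons x L)
  then show ?case by (cases i) (auto simp: funpow_Suc_right simp del: funpow.simps)
qed

lemma nthn_enc: "i < length L \<Longrightarrow> nthn (enc L) i = L ! i"
  by (simp add: nthn_def tlpow_enc Cons_nth_drop_Suc[symmetric])

lemma sum_ofbool_less: assumes "m \<le> n" shows "(\<Sum>i<n. of_bool (i < m) :: nat) = m"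
proof -
  have "{..<n} \<inter> {i. i < m} = {..<m}" using assms by auto
  then show ?thesis by simp
qed

lemma enc_eq_0: "enc l = 0 \<longleftrightarrow> l = []" by (cases l) auto

lemma lenn_enc: "lenn (enc L) = length L"
proof -
  have "(tlpow (enc L) i \<noteq> 0) = (i < length L)" for i
    by (simp add: tlpow_enc enc_eq_0 not_le)
  then show ?thesis unfolding lenn_def using sum_ofbool_less[OF length_le_enc[of L]] by simp
qed

lemma lenn_dec: "lenn n = length (dec n)" by (metis enc_dec lenn_enc)
lemma nthn_dec: "i < length (dec n) \<Longrightarrow> nthn n i = dec n ! i" by (metis enc_dec nthn_enc)

lemma rc_tln: "rc (Suc 0) (\<lambda>xs. tln (xs ! 0))"
  by (rule rc1I[where e="P2x (Mi (V 0) (K 1))"]) (auto simp: tln_def)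
lemma rc_hdn: "rc (Suc 0) (\<lambda>xs. hdn (xs ! 0))"
  by (rule rc1I[where e="P1x (Mi (V 0) (K 1))"]) (auto simp: hdn_def)
lemma rc_tlpow: "rc (Suc (Suc 0)) (\<lambda>xs. tlpow (xs ! 0) (xs ! 1))"
  by (rule rc2I[where e="It (Fn (\<lambda>xs. tln (xs ! 0)) [V 0]) (V 1) (V 0)"]) (auto simp: tlpow_def rc_tln)

definition TLPx :: "ex \<Rightarrow> ex \<Rightarrow> ex" where "TLPx a b = Fn (\<lambda>xs. tlpow (xs ! 0) (xs ! 1)) [a, b]"
lemma wfx_TLPx[simp]: "wfx (TLPx a b) = (wfx a \<and> wfx b)" by (auto simp: TLPx_def rc_tlpow[simplified])
lemma evx_TLPx[simp]: "evx env (TLPx a b) = tlpow (evx env a) (evx env b)" by (simp add: TLPx_def)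

lemma rc_nthn: "rc (Suc (Suc 0)) (\<lambda>xs. nthn (xs ! 0) (xs ! 1))"
  by (rule rc2I[where e="Fn (\<lambda>xs. hdn (xs ! 0)) [TLPx (V 0) (V 1)]"]) (auto simp: nthn_def rc_hdn)
lemma rc_lenn: "rc (Suc 0) (\<lambda>xs. lenn (xs ! 0))"
  by (rule rc1I[where e="Su (V 0) (nt (eqx (TLPx (V 1) (V 0)) (K 0)))"]) (auto simp: lenn_def)

definition NTHx :: "ex \<Rightarrow> ex \<Rightarrow> ex" where "NTHx a b = Fn (\<lambda>xs. nthn (xs ! 0) (xs ! 1)) [a, b]"
definition LENx :: "ex \<Rightarrow> ex" where "LENx a = Fn (\<lambda>xs. lenn (xs ! 0)) [a]"
definition HDx :: "ex \<Rightarrow> ex" where "HDx a = Fn (\<lambda>xs. hdn (xs ! 0)) [a]"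
definition TLx :: "ex \<Rightarrow> ex" where "TLx a = Fn (\<lambda>xs. tln (xs ! 0)) [a]"
definition CONSx :: "ex \<Rightarrow> ex \<Rightarrow> ex" where "CONSx a b = Pl (pex a b) (K 1)"

lemma wfx_L[simp]: "wfx (NTHx a b) = (wfx a \<and> wfx b)" "wfx (LENx a) = wfx a"
  "wfx (HDx a) = wfx a" "wfx (TLx a) = wfx a" "wfx (CONSx a b) = (wfx a \<and> wfx b)"
  by (auto simp: NTHx_def LENx_def HDx_def TLx_def CONSx_def rc_nthn[simplified] rc_lenn rc_hdn rc_tln)
lemma evx_L[simp]: "evx env (NTHx a b) = nthn (evx env a) (evx env b)"
  "evx env (LENx a) = lenn (evx env a)" "evx env (HDx a) = hdn (evx env a)"
  "evx env (TLx a) = tln (evx env a)" "evx env (CONSx a b) = cons (evx env a) (evx env b)"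
  by (auto simp: NTHx_def LENx_def HDx_def TLx_def CONSx_def cons_def)


fun code :: "recf \<Rightarrow> nat" where
  "code Zero = pe 0 0"
| "code Succ = pe 1 0"
| "code (Proj i) = pe 2 i"
| "code (Comp f gs) = pe 3 (pe (code f) (enc (map code gs)))"
| "code (Prec f g) = pe 4 (pe (code f) (code g))"
| "code (Mn f) = pe 5 (code f)"

lemma triangle_ge: "n \<le> triangle n" by (induction n) auto
lemma pe_ge_sum: "a + b \<le> pe a b"
  using triangle_ge[of "a + b"] by (simp add: pe_def prod_encode_def)
lemma p2_less: "p1 c \<noteq> 0 \<Longrightarrow> p2 c < c"
  using pe_ge_sum[of "p1 c" "p2 c"] by simp
lemma set_dec_less: "x \<in> set (dec n) \<Longrightarrow> x < n"
proof (induction n rule: dec.induct)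
  case (1 n)
  show ?case
  proof (cases "n = 0")
    case True then show ?thesis using 1 by simp
  next
    case False
    then have "n = cons (hdn n) (tln n)" by (simp add: cons_hd_tl)
    then have "dec n = hdn n # dec (tln n)" by (metis dec_cons)
    then show ?thesis using 1 False cons_gt1[of "hdn n" "tln n"] tln_less[of n]
      by (auto simp: cons_hd_tl)
  qed
qed

lemma p12_less: "p1 c \<noteq> 0 \<Longrightarrow> p1 (p2 c) < c"
  using p2_less[of c] p1_le[of "p2 c"] by simp
lemma p22_less: "p1 c \<noteq> 0 \<Longrightarrow> p2 (p2 c) < c"
  using p2_less[of c] p2_le[of "p2 c"] by simp

function decode :: "nat \<Rightarrow> recf" where
  "decode c = (if p1 c = 0 then Zero else if p1 c = 1 then Succ else if p1 c = 2 then Proj (p2 c)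
     else if p1 c = 3 then Comp (decode (p1 (p2 c))) (map decode (dec (p2 (p2 c))))
     else if p1 c = 4 then Prec (decode (p1 (p2 c))) (decode (p2 (p2 c)))
     else if p1 c = 5 then Mn (decode (p2 c)) else Zero)"
  by pat_completeness auto
termination
proof (relation "measure id")
  fix c x
  assume a: "p1 c \<noteq> 0" "p1 c \<noteq> 1" "p1 c \<noteq> 2"
  have lt: "p2 c < c" using a p2_less by blast
  show "(p1 (p2 c), c) \<in> measure id" using lt p1_le[of "p2 c"] by simp
  show "(p2 (p2 c), c) \<in> measure id" using lt p2_le[of "p2 c"] by simp
  show "(p2 c, c) \<in> measure id" using lt by simp
  assume "x \<in> set (dec (p2 (p2 c)))"
  then show "(x, c) \<in> measure id" using set_dec_less lt p2_le[of "p2 c"] by fastforce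
qed (auto simp: p12_less p22_less p2_less)
declare decode.simps[simp del]

lemma decode_code[simp]: "decode (code C) = C"
proof (induction C)
  case (Comp f gs)
  then show ?case by (subst decode.simps) (auto intro: map_idI)
qed (subst decode.simps, simp)+

section \<open>Judgments and derivations\<close>

definition jc :: "nat \<Rightarrow> nat" where "jc j = p1 j"
definition jx :: "nat \<Rightarrow> nat" where "jx j = p1 (p2 j)"
definition jy :: "nat \<Rightarrow> nat" where "jy j = p1 (p2 (p2 j))"
definition jh :: "nat \<Rightarrow> nat" where "jh j = p2 (p2 (p2 j))"
definition jmk :: "nat \<Rightarrow> nat \<Rightarrow> nat \<Rightarrow> nat \<Rightarrow> nat" where "jmk c x y h = pe c (pe x (pe y h))"

lemma j_jmk[simp]: "jc (jmk c x y h) = c" "jx (jmk c x y h) = x" "jy (jmk c x y h) = y" "jh (jmk c x y h) = h"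
  by (auto simp: jc_def jx_def jy_def jh_def jmk_def)

definition ok0 :: "((nat \<Rightarrow> bool) \<Rightarrow> bool) \<Rightarrow> nat \<Rightarrow> bool" where
  "ok0 Q j \<longleftrightarrow> p1 (jc j) = 0 \<and> jy j = 0"
definition ok1 :: "((nat \<Rightarrow> bool) \<Rightarrow> bool) \<Rightarrow> nat \<Rightarrow> bool" where
  "ok1 Q j \<longleftrightarrow> p1 (jc j) = 1 \<and> jx j \<noteq> 0 \<and> jy j = Suc (hdn (jx j))"
definition ok2 :: "((nat \<Rightarrow> bool) \<Rightarrow> bool) \<Rightarrow> nat \<Rightarrow> bool" where
  "ok2 Q j \<longleftrightarrow> p1 (jc j) = 2 \<and> p2 (jc j) < lenn (jx j) \<and> jy j = nthn (jx j) (p2 (jc j))"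
definition ok3 :: "((nat \<Rightarrow> bool) \<Rightarrow> bool) \<Rightarrow> nat \<Rightarrow> bool" where
  "ok3 Q j \<longleftrightarrow> p1 (jc j) = 3 \<and> lenn (jh j) = lenn (p2 (p2 (jc j)))
     \<and> (\<forall>m<lenn (p2 (p2 (jc j))). Q (\<lambda>j'. jc j' = nthn (p2 (p2 (jc j))) m \<and> jx j' = jx j \<and> jy j' = nthn (jh j) m))
     \<and> Q (\<lambda>j'. jc j' = p1 (p2 (jc j)) \<and> jx j' = jh j \<and> jy j' = jy j)"
definition ok4 :: "((nat \<Rightarrow> bool) \<Rightarrow> bool) \<Rightarrow> nat \<Rightarrow> bool" where
  "ok4 Q j \<longleftrightarrow> p1 (jc j) = 4 \<and> jx j \<noteq> 0 \<and> hdn (jx j) = 0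
     \<and> Q (\<lambda>j'. jc j' = p1 (p2 (jc j)) \<and> jx j' = tln (jx j) \<and> jy j' = jy j)"
definition ok5 :: "((nat \<Rightarrow> bool) \<Rightarrow> bool) \<Rightarrow> nat \<Rightarrow> bool" where
  "ok5 Q j \<longleftrightarrow> p1 (jc j) = 4 \<and> jx j \<noteq> 0 \<and> hdn (jx j) \<noteq> 0
     \<and> Q (\<lambda>j1. jc j1 = jc j \<and> jx j1 = cons (hdn (jx j) - 1) (tln (jx j))
         \<and> Q (\<lambda>j2. jc j2 = p2 (p2 (jc j)) \<and> jx j2 = cons (jy j1) (cons (hdn (jx j) - 1) (tln (jx j)))
               \<and> jy j2 = jy j))"
definition ok6 :: "((nat \<Rightarrow> bool) \<Rightarrow> bool) \<Rightarrow> nat \<Rightarrow> bool" where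
  "ok6 Q j \<longleftrightarrow> p1 (jc j) = 5 \<and> Q (\<lambda>j'. jc j' = p2 (jc j) \<and> jx j' = cons (jy j) (jx j) \<and> jy j' = 0)
     \<and> (\<forall>m<jy j. Q (\<lambda>j'. jc j' = p2 (jc j) \<and> jx j' = cons m (jx j) \<and> jy j' \<noteq> 0))"

definition okG :: "((nat \<Rightarrow> bool) \<Rightarrow> bool) \<Rightarrow> nat \<Rightarrow> bool" where
  "okG Q j \<longleftrightarrow> ok0 Q j \<or> ok1 Q j \<or> ok2 Q j \<or> ok3 Q j \<or> ok4 Q j \<or> ok5 Q j \<or> ok6 Q j"

lemmas ok_defs = okG_def ok0_def ok1_def ok2_def ok3_def ok4_def ok5_def ok6_def

definition sem :: "nat \<Rightarrow> bool" where
  "sem j \<longleftrightarrow> eval (decode (jc j)) (dec (jx j)) (jy j)"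

lemma dec_nz: "l \<noteq> 0 \<Longrightarrow> dec l = hdn l # dec (tln l)"
  by (metis cons_hd_tl dec_cons)

lemma okG_sound:
  assumes ok: "okG Q j" and H: "\<And>P. Q P \<Longrightarrow> \<exists>j'. P j' \<and> sem j'"
  shows "sem j"
proof -
  let ?c = "jc j" and ?x = "jx j" and ?y = "jy j" and ?h = "jh j"
  let ?a = "p2 ?c"
  have dc: "decode ?c = (if p1 ?c = 0 then Zero else if p1 ?c = 1 then Succ else if p1 ?c = 2 then Proj ?a
     else if p1 ?c = 3 then Comp (decode (p1 ?a)) (map decode (dec (p2 ?a)))
     else if p1 ?c = 4 then Prec (decode (p1 ?a)) (decode (p2 ?a))
     else if p1 ?c = 5 then Mn (decode ?a) else Zero)" by (rule decode.simps)
  from ok[unfolded ok_defs] consider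
    (z) "p1 ?c = 0 \<and> ?y = 0"
  | (s) "p1 ?c = 1 \<and> ?x \<noteq> 0 \<and> ?y = Suc (hdn ?x)"
  | (p) "p1 ?c = 2 \<and> ?a < lenn ?x \<and> ?y = nthn ?x ?a"
  | (c) "p1 ?c = 3 \<and> lenn ?h = lenn (p2 ?a)
     \<and> (\<forall>m<lenn (p2 ?a). Q (\<lambda>j'. jc j' = nthn (p2 ?a) m \<and> jx j' = ?x \<and> jy j' = nthn ?h m))
     \<and> Q (\<lambda>j'. jc j' = p1 ?a \<and> jx j' = ?h \<and> jy j' = ?y)"
  | (r0) "p1 ?c = 4 \<and> ?x \<noteq> 0 \<and> hdn ?x = 0
     \<and> Q (\<lambda>j'. jc j' = p1 ?a \<and> jx j' = tln ?x \<and> jy j' = ?y)"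
  | (rs) "p1 ?c = 4 \<and> ?x \<noteq> 0 \<and> hdn ?x \<noteq> 0
     \<and> Q (\<lambda>j1. jc j1 = ?c \<and> jx j1 = cons (hdn ?x - 1) (tln ?x)
         \<and> Q (\<lambda>j2. jc j2 = p2 ?a \<and> jx j2 = cons (jy j1) (cons (hdn ?x - 1) (tln ?x)) \<and> jy j2 = ?y))"
  | (m) "p1 ?c = 5 \<and> Q (\<lambda>j'. jc j' = ?a \<and> jx j' = cons ?y ?x \<and> jy j' = 0)
     \<and> (\<forall>m<?y. Q (\<lambda>j'. jc j' = ?a \<and> jx j' = cons m ?x \<and> jy j' \<noteq> 0))"
    by blast
  then show ?thesis
  proof cases
    case z
    then show ?thesis unfolding sem_def using dc by (auto intro: eval.intros)
  next
    case s
    then show ?thesis unfolding sem_def using dc by (auto simp: dec_nz intro: eval.intros)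
  next
    case p
    have "decode ?c = Proj ?a" using dc p by simp
    moreover have "?a < length (dec ?x)" "?y = dec ?x ! ?a" using p by (auto simp: lenn_dec nthn_dec)
    ultimately show ?thesis by (simp add: sem_def eval_Proj)
  next
    case c
    let ?G = "dec (p2 ?a)" and ?H = "dec ?h"
    have len: "length ?H = length ?G" using c by (simp add: lenn_dec)
    have "\<forall>m<length ?G. eval (decode (?G ! m)) (dec ?x) (?H ! m)"
    proof (intro allI impI)
      fix m assume "m < length ?G"
      then have mm: "m < lenn (p2 ?a)" by (simp add: lenn_dec)
      have "Q (\<lambda>j'. jc j' = nthn (p2 ?a) m \<and> jx j' = ?x \<and> jy j' = nthn ?h m)" using c mm by blast
      from H[OF this] obtain j' where "jc j' = nthn (p2 ?a) m \<and> jx j' = ?x \<and> jy j' = nthn ?h m" "sem j'"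
        by blast
      then show "eval (decode (?G ! m)) (dec ?x) (?H ! m)"
        using \<open>m < length ?G\<close> len by (auto simp: sem_def nthn_dec)
    qed
    then have la: "list_all2 (\<lambda>g y. eval g (dec ?x) y) (map decode ?G) ?H"
      using len by (auto simp: list_all2_conv_all_nth)
    obtain j' where "jc j' = p1 ?a \<and> jx j' = ?h \<and> jy j' = ?y" "sem j'" using c H by blast
    then have "eval (decode (p1 ?a)) ?H ?y" by (auto simp: sem_def)
    then show ?thesis unfolding sem_def using dc c la by (auto intro: eval_Comp)
  next
    case r0
    obtain j' where "jc j' = p1 ?a \<and> jx j' = tln ?x \<and> jy j' = ?y" "sem j'" using r0 H by blast
    then have "eval (decode (p1 ?a)) (dec (tln ?x)) ?y" by (auto simp: sem_def)
    then show ?thesis unfolding sem_def using dc r0 by (auto simp: dec_nz intro: eval_Prec0)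
  next
    case rs
    obtain j1 where j1: "jc j1 = ?c" "jx j1 = cons (hdn ?x - 1) (tln ?x)"
      "Q (\<lambda>j2. jc j2 = p2 ?a \<and> jx j2 = cons (jy j1) (cons (hdn ?x - 1) (tln ?x)) \<and> jy j2 = ?y)"
      "sem j1" using rs H by blast
    obtain j2 where j2: "jc j2 = p2 ?a" "jx j2 = cons (jy j1) (cons (hdn ?x - 1) (tln ?x))" "jy j2 = ?y"
      "sem j2" using j1(3) H by blast
    obtain n where n: "hdn ?x = Suc n" using rs by (cases "hdn ?x") auto
    have e1: "eval (decode ?c) (n # dec (tln ?x)) (jy j1)" using j1 n by (simp add: sem_def)
    have e2: "eval (decode (p2 ?a)) (jy j1 # n # dec (tln ?x)) ?y" using j2 n by (simp add: sem_def)
    have "decode ?c = Prec (decode (p1 ?a)) (decode (p2 ?a))" using dc rs by simp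
    then have "eval (decode ?c) (Suc n # dec (tln ?x)) ?y" using e1 e2 by (auto intro: eval_PrecS)
    then show ?thesis unfolding sem_def using rs n by (simp add: dec_nz)
  next
    case m
    obtain j' where "jc j' = ?a \<and> jx j' = cons ?y ?x \<and> jy j' = 0" "sem j'" using m H by blast
    then have e0: "eval (decode ?a) (?y # dec ?x) 0" by (auto simp: sem_def)
    have "\<forall>k<?y. \<exists>v. eval (decode ?a) (k # dec ?x) (Suc v)"
    proof (intro allI impI)
      fix k assume "k < ?y"
      then obtain j' where "jc j' = ?a \<and> jx j' = cons k ?x \<and> jy j' \<noteq> 0" "sem j'" using m H by blast
      then have "eval (decode ?a) (k # dec ?x) (Suc (jy j' - 1))" by (auto simp: sem_def)
      then show "\<exists>v. eval (decode ?a) (k # dec ?x) (Suc v)" by blast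
    qed
    then show ?thesis unfolding sem_def using dc m e0 by (auto intro: eval_Mn)
  qed
qed

definition valid :: "nat \<Rightarrow> bool" where
  "valid d \<longleftrightarrow> (\<forall>i<lenn d. okG (\<lambda>P. \<exists>k<i. P (nthn d k)) (nthn d i))"

lemma valid_sound: "valid d \<Longrightarrow> i < lenn d \<Longrightarrow> sem (nthn d i)"
proof (induction i rule: less_induct)
  case (less i)
  show ?case
  proof (rule okG_sound)
    show "okG (\<lambda>P. \<exists>k<i. P (nthn d k)) (nthn d i)" using less.prems valid_def by blast
    fix P assume "\<exists>k<i. P (nthn d k)"
    then obtain k where "k < i" "P (nthn d k)" by blast
    then show "\<exists>j'. P j' \<and> sem j'" using less by (meson order.strict_trans)
  qed
qed

definition Qs :: "nat set \<Rightarrow> (nat \<Rightarrow> bool) \<Rightarrow> bool" where "Qs S P \<longleftrightarrow> (\<exists>x\<in>S. P x)"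

lemma okG_mono_gen:
  assumes ok: "okG Q j" and H: "\<And>P P'. Q P \<Longrightarrow> (\<And>x. P x \<Longrightarrow> P' x) \<Longrightarrow> Q' P'"
  shows "okG Q' j"
proof -
  have Hid: "\<And>P. Q P \<Longrightarrow> Q' P" using H by blast
  have "ok0 Q' j" if "ok0 Q j" using that by (simp add: ok0_def)
  moreover have "ok1 Q' j" if "ok1 Q j" using that by (simp add: ok1_def)
  moreover have "ok2 Q' j" if "ok2 Q j" using that by (simp add: ok2_def)
  moreover have "ok3 Q' j" if "ok3 Q j" using that Hid unfolding ok3_def by blast
  moreover have "ok4 Q' j" if "ok4 Q j" using that Hid unfolding ok4_def by blast
  moreover have "ok5 Q' j" if "ok5 Q j"
  proof -
    have "\<And>P P'. Q P \<Longrightarrow> (\<And>x. P x \<Longrightarrow> P' x) \<Longrightarrow> Q' P'" by (rule H)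
    from that show ?thesis unfolding ok5_def
      apply (elim conjE)
      apply (intro conjI, assumption+)
      apply (erule H)
      apply (elim conjE)
      apply (intro conjI, assumption+)
      apply (erule H)
      apply assumption
      done
  qed
  moreover have "ok6 Q' j" if "ok6 Q j" using that Hid unfolding ok6_def by blast
  ultimately show ?thesis using ok unfolding okG_def by blast
qed

lemma okG_mono: "okG (Qs S) j \<Longrightarrow> S \<subseteq> S' \<Longrightarrow> okG (Qs S') j"
  by (erule okG_mono_gen) (auto simp: Qs_def)

definition validL :: "nat list \<Rightarrow> bool" where
  "validL D \<longleftrightarrow> (\<forall>i<length D. okG (Qs (set (take i D))) (D ! i))"

lemma valid_enc: "valid (enc D) \<longleftrightarrow> validL D"
proof -
  have "(\<lambda>P. \<exists>k<i. P (nthn (enc D) k)) = Qs (set (take i D))" if "i < length D" for i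
  proof (rule ext)
    fix P
    have "(\<exists>k<i. P (nthn (enc D) k)) \<longleftrightarrow> (\<exists>k<i. P (D ! k))" using that by (auto simp: nthn_enc)
    also have "\<dots> \<longleftrightarrow> (\<exists>x\<in>set (take i D). P x)"
    proof
      assume "\<exists>k<i. P (D ! k)"
      then obtain k where "k < i" "P (D ! k)" by blast
      then have "take i D ! k = D ! k" using that by simp
      moreover have "take i D ! k \<in> set (take i D)" by (rule nth_mem) (use that \<open>k < i\<close> in simp)
      ultimately show "\<exists>x\<in>set (take i D). P x" using \<open>P (D ! k)\<close> by metis
    next
      assume "\<exists>x\<in>set (take i D). P x"
      then obtain x where "x \<in> set (take i D)" "P x" by blast
      then obtain k where "k < length (take i D)" "take i D ! k = x" by (auto simp: in_set_conv_nth)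
      then show "\<exists>k<i. P (D ! k)" using that \<open>P x\<close> by auto
    qed
    finally show "(\<exists>k<i. P (nthn (enc D) k)) = Qs (set (take i D)) P" by (simp add: Qs_def)
  qed
  then show ?thesis unfolding valid_def validL_def by (simp add: lenn_enc nthn_enc)
qed

lemma validL_append: "validL A \<Longrightarrow> validL B \<Longrightarrow> validL (A @ B)"
  unfolding validL_def
proof (intro allI impI)
  fix i assume A: "\<forall>i<length A. okG (Qs (set (take i A))) (A ! i)"
    and B: "\<forall>i<length B. okG (Qs (set (take i B))) (B ! i)" and i: "i < length (A @ B)"
  show "okG (Qs (set (take i (A @ B)))) ((A @ B) ! i)"
  proof (cases "i < length A")
    case True then show ?thesis using A by (simp add: nth_append)
  next
    case False
    then have "okG (Qs (set (take (i - length A) B))) (B ! (i - length A))" using B i by simp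
    then show ?thesis using False by (auto simp: nth_append elim!: okG_mono)
  qed
qed

lemma validL_snoc: "validL A \<Longrightarrow> okG (Qs (set A)) j \<Longrightarrow> validL (A @ [j])"
  unfolding validL_def by (auto simp: nth_append less_Suc_eq)

lemma validL_Nil[simp]: "validL []" by (simp add: validL_def)

definition has :: "nat list \<Rightarrow> nat \<Rightarrow> nat \<Rightarrow> nat \<Rightarrow> bool" where
  "has D c x y \<longleftrightarrow> (\<exists>j\<in>set D. jc j = c \<and> jx j = x \<and> jy j = y)"

lemma has_append: "has A c x y \<Longrightarrow> has (A @ B) c x y" "has B c x y \<Longrightarrow> has (A @ B) c x y"
  by (auto simp: has_def)

lemma gather_list:
  "list_all2 (\<lambda>g y. \<exists>D. validL D \<and> has D (code g) x y) gs ys \<Longrightarrow>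
   \<exists>D. validL D \<and> (\<forall>m<length gs. has D (code (gs ! m)) x (ys ! m))"
proof (induction gs arbitrary: ys)
  case Nil then show ?case by (intro exI[of _ "[]"]) simp
next
  case (Cons g gs)
  then obtain y ys' where ys: "ys = y # ys'" and h: "\<exists>D. validL D \<and> has D (code g) x y"
    and r: "list_all2 (\<lambda>g y. \<exists>D. validL D \<and> has D (code g) x y) gs ys'"
    by (auto simp: list_all2_Cons1)
  obtain D1 where D1: "validL D1" "has D1 (code g) x y" using h by blast
  obtain D2 where D2: "validL D2" "\<forall>m<length gs. has D2 (code (gs ! m)) x (ys' ! m)"
    using Cons.IH[OF r] by blast
  show ?case
    apply (rule exI[of _ "D1 @ D2"])
    using D1 D2 ys by (auto simp: validL_append has_append nth_Cons' less_Suc_eq_0_disj)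
qed

lemma gather_nat:
  "(\<forall>m<(n::nat). \<exists>D. validL D \<and> (\<exists>j\<in>set D. jc j = c \<and> jx j = x m \<and> jy j \<noteq> 0)) \<Longrightarrow>
   \<exists>D. validL D \<and> (\<forall>m<n. \<exists>j\<in>set D. jc j = c \<and> jx j = x m \<and> jy j \<noteq> 0)"
proof (induction n)
  case 0 then show ?case by (intro exI[of _ "[]"]) simp
next
  case (Suc n)
  obtain D1 where D1: "validL D1" "\<forall>m<n. \<exists>j\<in>set D1. jc j = c \<and> jx j = x m \<and> jy j \<noteq> 0"
    using Suc by auto
  obtain D2 where D2: "validL D2" "\<exists>j\<in>set D2. jc j = c \<and> jx j = x n \<and> jy j \<noteq> 0"
    using Suc.prems by blast
  show ?case
    apply (rule exI[of _ "D1 @ D2"])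
    using D1 D2 by (auto simp: validL_append less_Suc_eq)
qed

lemma snoc_has: "validL D \<Longrightarrow> okG (Qs (set D)) (jmk c x y h) \<Longrightarrow>
  \<exists>D'. validL D' \<and> has D' c x y"
  by (intro exI[of _ "D @ [jmk c x y h]"]) (auto simp: validL_snoc has_def)

lemma complete: "eval C XS y \<Longrightarrow> \<exists>D. validL D \<and> has D (code C) (enc XS) y"
proof (induction rule: eval.induct)
  case (eval_Zero xs)
  show ?case by (rule snoc_has[OF validL_Nil, where h=0]) (simp add: okG_def ok0_def)
next
  case (eval_Succ x xs)
  show ?case by (rule snoc_has[OF validL_Nil, where h=0]) (simp add: okG_def ok1_def)
next
  case (eval_Proj i xs)
  show ?case by (rule snoc_has[OF validL_Nil, where h=0]) (simp add: okG_def ok2_def lenn_enc nthn_enc eval_Proj)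
next
  case (eval_Comp xs gs ys f z)
  have "list_all2 (\<lambda>g y. \<exists>D. validL D \<and> has D (code g) (enc xs) y) gs ys"
    using eval_Comp.IH(1) by (rule list_all2_mono) blast
  from gather_list[OF this] obtain D1 where D1: "validL D1"
    "\<forall>m<length gs. has D1 (code (gs ! m)) (enc xs) (ys ! m)" by blast
  obtain D2 where D2: "validL D2" "has D2 (code f) (enc ys) z" using eval_Comp.IH(2) by blast
  have len: "length ys = length gs" using eval_Comp.IH(1) by (simp add: list_all2_lengthD)
  show ?case
  proof (rule snoc_has[where D="D1 @ D2" and h="enc ys"])
    show "validL (D1 @ D2)" using D1 D2 by (simp add: validL_append)
    show "okG (Qs (set (D1 @ D2))) (jmk (code (Comp f gs)) (enc xs) z (enc ys))"
      unfolding okG_def ok3_def using D1(2) D2(2) len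
      by (simp add: lenn_enc nthn_enc Qs_def has_def) (metis Un_iff nth_map)
  qed
next
  case (eval_Prec0 f xs y g)
  obtain D where D: "validL D" "has D (code f) (enc xs) y" using eval_Prec0.IH by blast
  show ?case
  proof (rule snoc_has[where D=D and h=0])
    show "okG (Qs (set D)) (jmk (code (Prec f g)) (enc (0 # xs)) y 0)"
      unfolding okG_def ok4_def using D(2) by (simp add: Qs_def has_def)
  qed (rule D)
next
  case (eval_PrecS f g n xs y z)
  obtain D1 where D1: "validL D1" "has D1 (code (Prec f g)) (enc (n # xs)) y" using eval_PrecS.IH(1) by blast
  obtain D2 where D2: "validL D2" "has D2 (code g) (enc (y # n # xs)) z" using eval_PrecS.IH(2) by blast
  show ?case
  proof (rule snoc_has[where D="D1 @ D2" and h=0])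
    show "validL (D1 @ D2)" using D1 D2 by (simp add: validL_append)
    show "okG (Qs (set (D1 @ D2))) (jmk (code (Prec f g)) (enc (Suc n # xs)) z 0)"
      unfolding okG_def ok5_def using D1(2) D2(2) by (simp add: Qs_def has_def) blast
  qed
next
  case (eval_Mn f n xs)
  obtain D1 where D1: "validL D1" "has D1 (code f) (enc (n # xs)) 0" using eval_Mn.IH(1) by blast
  have "\<forall>m<n. \<exists>D. validL D \<and> (\<exists>j\<in>set D. jc j = code f \<and> jx j = enc (m # xs) \<and> jy j \<noteq> 0)"
  proof (intro allI impI)
    fix m assume "m < n"
    then obtain k where "\<exists>D. validL D \<and> has D (code f) (enc (m # xs)) (Suc k)"
      using eval_Mn.IH(2) by blast
    then obtain D j where "validL D" "j \<in> set D" "jc j = code f" "jx j = enc (m # xs)" "jy j = Suc k"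
      by (auto simp: has_def)
    then show "\<exists>D. validL D \<and> (\<exists>j\<in>set D. jc j = code f \<and> jx j = enc (m # xs) \<and> jy j \<noteq> 0)"
      by (intro exI[of _ D] bexI[of _ j]) auto
  qed
  from gather_nat[OF this] obtain D2 where D2: "validL D2"
    "\<forall>m<n. \<exists>j\<in>set D2. jc j = code f \<and> jx j = enc (m # xs) \<and> jy j \<noteq> 0" by blast
  show ?case
  proof (rule snoc_has[where D="D1 @ D2" and h=0])
    show "validL (D1 @ D2)" using D1 D2 by (simp add: validL_append)
    show "okG (Qs (set (D1 @ D2))) (jmk (code (Mn f)) (enc xs) n 0)"
      unfolding okG_def ok6_def using D1(2) D2(2) by (simp add: Qs_def has_def) blast
  qed
qed

section \<open>The halting set\<close>

definition Tr :: "nat \<Rightarrow> nat \<Rightarrow> bool" where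
  "Tr e s \<longleftrightarrow> valid s \<and> (\<exists>i<lenn s. jc (nthn s i) = e \<and> jx (nthn s i) = cons e 0)"

lemma halt_iff: "(\<exists>s. Tr (code C) s) \<longleftrightarrow> (\<exists>y. eval C [code C] y)"
proof
  assume "\<exists>s. Tr (code C) s"
  then obtain s i where "valid s" "i < lenn s" "jc (nthn s i) = code C" "jx (nthn s i) = cons (code C) 0"
    unfolding Tr_def by blast
  then show "\<exists>y. eval C [code C] y" using valid_sound[of s i] by (auto simp: sem_def)
next
  assume "\<exists>y. eval C [code C] y"
  then obtain y where "eval C [code C] y" by blast
  from complete[OF this] obtain D where D: "validL D" "has D (code C) (enc [code C]) y" by blast
  then obtain i where "i < length D" "jc (D ! i) = code C" "jx (D ! i) = cons (code C) 0"
    by (auto simp: has_def in_set_conv_nth)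
  then have "Tr (code C) (enc D)" using D(1)
    by (auto simp: Tr_def valid_enc lenn_enc nthn_enc)
  then show "\<exists>s. Tr (code C) s" by blast
qed

lemma K_undec: "\<not> (\<exists>c. \<forall>x. eval c [x] (of_bool (\<exists>s. Tr x s)))"
proof
  assume "\<exists>c. \<forall>x. eval c [x] (of_bool (\<exists>s. Tr x s))"
  then obtain c where c: "\<And>x. eval c [x] (of_bool (\<exists>s. Tr x s))" by blast
  define D where "D = Mn (Comp c [Proj 1])"
  have step: "eval (Comp c [Proj 1]) [n, x] v \<longleftrightarrow> eval c [x] v" for n x v
  proof
    assume "eval (Comp c [Proj 1]) [n, x] v"
    then show "eval c [x] v"
      by (cases rule: evalCompE) (auto simp: list_all2_Cons1 elim!: evalProjE)
  next
    assume "eval c [x] v"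
    then show "eval (Comp c [Proj 1]) [n, x] v"
      by (auto intro!: eval_Comp[where ys="[x]"] intro: eval_Proj[of 1 "[n, x]", simplified])
  qed
  have key: "(\<exists>y. eval D [x] y) \<longleftrightarrow> \<not> (\<exists>s. Tr x s)" for x
  proof
    assume "\<exists>y. eval D [x] y"
    then obtain y where "eval D [x] y" by blast
    then have "eval (Comp c [Proj 1]) [y, x] 0" unfolding D_def by (cases rule: evalMnE) auto
    then have "eval c [x] 0" using step by blast
    then have "(0::nat) = of_bool (\<exists>s. Tr x s)" using c[of x] by (rule eval_det)
    then show "\<not> (\<exists>s. Tr x s)" by simp
  next
    assume "\<not> (\<exists>s. Tr x s)"
    then have "eval c [x] 0" using c[of x] by simp
    then have "eval (Comp c [Proj 1]) [0, x] 0" using step by blast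
    then show "\<exists>y. eval D [x] y" unfolding D_def by (auto intro: eval_Mn[where n=0])
  qed
  show False using key[of "code D"] halt_iff[of D] by blast
qed


definition JCx :: "ex \<Rightarrow> ex" where "JCx a = P1x a"
definition JXx :: "ex \<Rightarrow> ex" where "JXx a = P1x (P2x a)"
definition JYx :: "ex \<Rightarrow> ex" where "JYx a = P1x (P2x (P2x a))"
definition JHx :: "ex \<Rightarrow> ex" where "JHx a = P2x (P2x (P2x a))"

lemma wfx_J[simp]: "wfx (JCx a) = wfx a" "wfx (JXx a) = wfx a" "wfx (JYx a) = wfx a" "wfx (JHx a) = wfx a"
  by (auto simp: JCx_def JXx_def JYx_def JHx_def)
lemma evx_J[simp]: "evx env (JCx a) = jc (evx env a)" "evx env (JXx a) = jx (evx env a)"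
  "evx env (JYx a) = jy (evx env a)" "evx env (JHx a) = jh (evx env a)"
  by (auto simp: JCx_def JXx_def JYx_def JHx_def jc_def jx_def jy_def jh_def)

definition ex3 :: "nat \<Rightarrow> nat \<Rightarrow> nat \<Rightarrow> nat \<Rightarrow> nat \<Rightarrow> bool" where
  "ex3 d i c x y \<longleftrightarrow> (\<exists>k<i. jc (nthn d k) = c \<and> jx (nthn d k) = x \<and> jy (nthn d k) = y)"
definition exnz :: "nat \<Rightarrow> nat \<Rightarrow> nat \<Rightarrow> nat \<Rightarrow> bool" where
  "exnz d i c x \<longleftrightarrow> (\<exists>k<i. jc (nthn d k) = c \<and> jx (nthn d k) = x \<and> jy (nthn d k) \<noteq> 0)"
definition allcomp :: "nat \<Rightarrow> nat \<Rightarrow> nat \<Rightarrow> nat \<Rightarrow> nat \<Rightarrow> bool" where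
  "allcomp d i gs x h \<longleftrightarrow> (\<forall>m<lenn gs. ex3 d i (nthn gs m) x (nthn h m))"
definition allmn :: "nat \<Rightarrow> nat \<Rightarrow> nat \<Rightarrow> nat \<Rightarrow> nat \<Rightarrow> bool" where
  "allmn d i a y x \<longleftrightarrow> (\<forall>m<y. exnz d i a (cons m x))"
definition precS :: "nat \<Rightarrow> nat \<Rightarrow> nat \<Rightarrow> nat \<Rightarrow> nat \<Rightarrow> nat \<Rightarrow> bool" where
  "precS d i c g x y \<longleftrightarrow> (\<exists>k<i. jc (nthn d k) = c \<and> jx (nthn d k) = x \<and> ex3 d i g (cons (jy (nthn d k)) x) y)"

lemma rc_ex3: "rc (Suc (Suc (Suc (Suc (Suc 0))))) (\<lambda>xs. of_bool (ex3 (xs!0) (xs!1) (xs!2) (xs!3) (xs!4)))"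
  by (rule rc5I[where e="exx (V 1) (andx (eqx (JCx (NTHx (V 1) (V 0))) (V 3))
     (andx (eqx (JXx (NTHx (V 1) (V 0))) (V 4)) (eqx (JYx (NTHx (V 1) (V 0))) (V 5))))"])
     (auto simp: ex3_def)

definition EX3x :: "ex \<Rightarrow> ex \<Rightarrow> ex \<Rightarrow> ex \<Rightarrow> ex \<Rightarrow> ex" where
  "EX3x a b c d e = Fn (\<lambda>xs. of_bool (ex3 (xs!0) (xs!1) (xs!2) (xs!3) (xs!4))) [a, b, c, d, e]"
lemma wfx_EX3x[simp]: "wfx (EX3x a b c d e) = (wfx a \<and> wfx b \<and> wfx c \<and> wfx d \<and> wfx e)"
  using rc_ex3 by (auto simp: EX3x_def numeral_eq_Suc)
lemma evx_EX3x[simp]: "evx env (EX3x a b c d e) = of_bool (ex3 (evx env a) (evx env b) (evx env c) (evx env d) (evx env e))"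
  by (simp add: EX3x_def)

lemma rc_exnz: "rc (Suc (Suc (Suc (Suc 0)))) (\<lambda>xs. of_bool (exnz (xs!0) (xs!1) (xs!2) (xs!3)))"
  by (rule rc4I[where e="exx (V 1) (andx (eqx (JCx (NTHx (V 1) (V 0))) (V 3))
     (andx (eqx (JXx (NTHx (V 1) (V 0))) (V 4)) (nt (eqx (JYx (NTHx (V 1) (V 0))) (K 0)))))"])
     (auto simp: exnz_def)

definition EXNZx :: "ex \<Rightarrow> ex \<Rightarrow> ex \<Rightarrow> ex \<Rightarrow> ex" where
  "EXNZx a b c d = Fn (\<lambda>xs. of_bool (exnz (xs!0) (xs!1) (xs!2) (xs!3))) [a, b, c, d]"
lemma wfx_EXNZx[simp]: "wfx (EXNZx a b c d) = (wfx a \<and> wfx b \<and> wfx c \<and> wfx d)"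
  using rc_exnz by (auto simp: EXNZx_def numeral_eq_Suc)
lemma evx_EXNZx[simp]: "evx env (EXNZx a b c d) = of_bool (exnz (evx env a) (evx env b) (evx env c) (evx env d))"
  by (simp add: EXNZx_def)

lemma rc_allcomp: "rc (Suc (Suc (Suc (Suc (Suc 0))))) (\<lambda>xs. of_bool (allcomp (xs!0) (xs!1) (xs!2) (xs!3) (xs!4)))"
  by (rule rc5I[where e="allx (LENx (V 2)) (EX3x (V 1) (V 2) (NTHx (V 3) (V 0)) (V 4) (NTHx (V 5) (V 0)))"])
     (auto simp: allcomp_def)

lemma rc_allmn: "rc (Suc (Suc (Suc (Suc (Suc 0))))) (\<lambda>xs. of_bool (allmn (xs!0) (xs!1) (xs!2) (xs!3) (xs!4)))"
  by (rule rc5I[where e="allx (V 3) (EXNZx (V 1) (V 2) (V 3) (CONSx (V 0) (V 5)))"])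
     (auto simp: allmn_def)

lemma rc_precS: "rc (Suc (Suc (Suc (Suc (Suc (Suc 0)))))) (\<lambda>xs. of_bool (precS (xs!0) (xs!1) (xs!2) (xs!3) (xs!4) (xs!5)))"
  by (rule rc6I[where e="exx (V 1) (andx (eqx (JCx (NTHx (V 1) (V 0))) (V 3))
     (andx (eqx (JXx (NTHx (V 1) (V 0))) (V 5))
       (EX3x (V 1) (V 2) (V 4) (CONSx (JYx (NTHx (V 1) (V 0))) (V 5)) (V 6))))"])
     (auto simp: precS_def)

definition okn :: "nat \<Rightarrow> nat \<Rightarrow> bool" where
  "okn d i \<longleftrightarrow> okG (\<lambda>P. \<exists>k<i. P (nthn d k)) (nthn d i)"

definition q0 where "q0 d i \<longleftrightarrow> (let j = nthn d i in p1 (jc j) = 0 \<and> jy j = 0)"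
definition q1 where "q1 d i \<longleftrightarrow> (let j = nthn d i in p1 (jc j) = 1 \<and> jx j \<noteq> 0 \<and> jy j = Suc (hdn (jx j)))"
definition q2 where "q2 d i \<longleftrightarrow> (let j = nthn d i in p1 (jc j) = 2 \<and> p2 (jc j) < lenn (jx j) \<and> jy j = nthn (jx j) (p2 (jc j)))"
definition q3 where "q3 d i \<longleftrightarrow> (let j = nthn d i in p1 (jc j) = 3 \<and> lenn (jh j) = lenn (p2 (p2 (jc j))) \<and> allcomp d i (p2 (p2 (jc j))) (jx j) (jh j)
       \<and> ex3 d i (p1 (p2 (jc j))) (jh j) (jy j))"
definition q4 where "q4 d i \<longleftrightarrow> (let j = nthn d i in p1 (jc j) = 4 \<and> jx j \<noteq> 0 \<and> hdn (jx j) = 0 \<and> ex3 d i (p1 (p2 (jc j))) (tln (jx j)) (jy j))"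
definition q5 where "q5 d i \<longleftrightarrow> (let j = nthn d i in p1 (jc j) = 4 \<and> jx j \<noteq> 0 \<and> hdn (jx j) \<noteq> 0
       \<and> precS d i (jc j) (p2 (p2 (jc j))) (cons (hdn (jx j) - 1) (tln (jx j))) (jy j))"
definition q6 where "q6 d i \<longleftrightarrow> (let j = nthn d i in p1 (jc j) = 5 \<and> ex3 d i (p2 (jc j)) (cons (jy j) (jx j)) 0 \<and> allmn d i (p2 (jc j)) (jy j) (jx j))"

lemma okn_alt: "okn d i \<longleftrightarrow> q0 d i \<or> q1 d i \<or> q2 d i \<or> q3 d i \<or> q4 d i \<or> q5 d i \<or> q6 d i"
  unfolding okn_def ok_defs ex3_def allcomp_def precS_def allmn_def exnz_def Let_def
    q0_def q1_def q2_def q3_def q4_def q5_def q6_def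
  by (rule refl)

definition "JJ = NTHx (V 0) (V 1)"
definition "CC = JCx JJ"
definition "XX = JXx JJ"
definition "YY = JYx JJ"
definition "HH = JHx JJ"

lemma wfx_JJ[simp]: "wfx JJ" "wfx CC" "wfx XX" "wfx YY" "wfx HH"
  by (auto simp: JJ_def CC_def XX_def YY_def HH_def)
lemma evx_JJ[simp]: "evx [d, i] CC = jc (nthn d i)" "evx [d, i] XX = jx (nthn d i)"
   "evx [d, i] YY = jy (nthn d i)" "evx [d, i] HH = jh (nthn d i)"
  by (auto simp: JJ_def CC_def XX_def YY_def HH_def)

definition "e0 = andx (eqx (P1x CC) (K 0)) (eqx YY (K 0))"
definition "e1 = andx (eqx (P1x CC) (K 1)) (andx (nt (eqx XX (K 0))) (eqx YY (Pl (HDx XX) (K 1))))"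
definition "e2 = andx (eqx (P1x CC) (K 2)) (andx (ltx (P2x CC) (LENx XX)) (eqx YY (NTHx XX (P2x CC))))"
definition "e3 = andx (eqx (P1x CC) (K 3)) (andx (eqx (LENx HH) (LENx (P2x (P2x CC))))
          (andx (Fn (\<lambda>xs. of_bool (allcomp (xs!0) (xs!1) (xs!2) (xs!3) (xs!4))) [V 0, V 1, P2x (P2x CC), XX, HH])
                (EX3x (V 0) (V 1) (P1x (P2x CC)) HH YY)))"
definition "e4 = andx (eqx (P1x CC) (K 4)) (andx (nt (eqx XX (K 0))) (andx (eqx (HDx XX) (K 0))
          (EX3x (V 0) (V 1) (P1x (P2x CC)) (TLx XX) YY)))"
definition "e5 = andx (eqx (P1x CC) (K 4)) (andx (nt (eqx XX (K 0))) (andx (nt (eqx (HDx XX) (K 0)))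
          (Fn (\<lambda>xs. of_bool (precS (xs!0) (xs!1) (xs!2) (xs!3) (xs!4) (xs!5)))
              [V 0, V 1, CC, P2x (P2x CC), CONSx (Mi (HDx XX) (K 1)) (TLx XX), YY])))"
definition "e6 = andx (eqx (P1x CC) (K 5)) (andx (EX3x (V 0) (V 1) (P2x CC) (CONSx YY XX) (K 0))
          (Fn (\<lambda>xs. of_bool (allmn (xs!0) (xs!1) (xs!2) (xs!3) (xs!4))) [V 0, V 1, P2x CC, YY, XX]))"

lemma wfx_e: "wfx e0" "wfx e1" "wfx e2" "wfx e3" "wfx e4" "wfx e5" "wfx e6"
  using rc_allcomp rc_precS rc_allmn
  by (simp_all add: e0_def e1_def e2_def e3_def e4_def e5_def e6_def)

lemma evx_e0: "evx [d, i] e0 = of_bool (q0 d i)" by (simp add: e0_def q0_def Let_def)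
lemma evx_e1: "evx [d, i] e1 = of_bool (q1 d i)" by (simp add: e1_def q1_def Let_def)
lemma evx_e2: "evx [d, i] e2 = of_bool (q2 d i)" by (simp add: e2_def q2_def Let_def)
lemma evx_e3: "evx [d, i] e3 = of_bool (q3 d i)" by (simp add: e3_def q3_def Let_def)
lemma evx_e4: "evx [d, i] e4 = of_bool (q4 d i)" by (simp add: e4_def q4_def Let_def)
lemma evx_e5: "evx [d, i] e5 = of_bool (q5 d i)" by (simp add: e5_def q5_def Let_def)
lemma evx_e6: "evx [d, i] e6 = of_bool (q6 d i)" by (simp add: e6_def q6_def Let_def)

definition "okE = orx e0 (orx e1 (orx e2 (orx e3 (orx e4 (orx e5 e6)))))"

lemma rc_okn: "rc (Suc (Suc 0)) (\<lambda>xs. of_bool (okn (xs!0) (xs!1)))"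
proof (rule rc2I[where e=okE])
  show "wfx okE" using wfx_e by (simp add: okE_def)
  fix d i
  show "evx [d, i] okE = of_bool (okn ([d, i] ! 0) ([d, i] ! 1))"
    by (simp only: okE_def evx_orx evx_e0 evx_e1 evx_e2 evx_e3 evx_e4 evx_e5 evx_e6 okn_alt)
      (simp add: of_bool_def)
qed

lemma rc_valid: "rc (Suc 0) (\<lambda>xs. of_bool (valid (xs!0)))"
  using rc_okn
  by (intro rc1I[where e="allx (LENx (V 0)) (Fn (\<lambda>xs. of_bool (okn (xs!0) (xs!1))) [V 1, V 0])"])
     (auto simp: valid_def okn_def numeral_eq_Suc)

lemma rc_Tr: "rc (Suc (Suc 0)) (\<lambda>xs. of_bool (Tr (xs!0) (xs!1)))"
  using rc_valid
  by (intro rc2I[where e="andx (Fn (\<lambda>xs. of_bool (valid (xs!0))) [V 1])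
      (exx (LENx (V 1)) (andx (eqx (JCx (NTHx (V 2) (V 0))) (V 1)) (eqx (JXx (NTHx (V 2) (V 0))) (CONSx (V 1) (K 0)))))"])
      (auto simp: Tr_def)


lemma rc1_cf: "rc (Suc 0) f \<Longrightarrow> computable_fun (\<lambda>x. f [x])"
  unfolding rc_def computable_fun_def by (metis length_Cons list.size(3))

lemma cf_rc1: assumes "computable_fun h" shows "rc (Suc 0) (\<lambda>xs. h (xs ! 0))"
proof -
  obtain c where c: "\<And>x. eval c [x] (h x)" using assms unfolding computable_fun_def by blast
  have "eval c xs (h (xs ! 0))" if "length xs = Suc 0" for xs
  proof -
    from that obtain a where "xs = [a]" by (auto simp: length_Suc_conv)
    then show ?thesis using c[of a] by simp
  qed
  then show ?thesis unfolding rc_def by blast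
qed

lemma rc2_crel: "rc (Suc (Suc 0)) (\<lambda>xs. of_bool ((xs ! 0, xs ! 1) \<in> R)) \<Longrightarrow> computable_rel R"
  unfolding rc_def computable_rel_def of_bool_def
  by (metis (no_types, lifting) length_Cons list.size(3) nth_Cons_0 nth_Cons_Suc One_nat_def)

lemma crel_rc2: assumes "computable_rel R" shows "rc (Suc (Suc 0)) (\<lambda>xs. of_bool ((xs ! 0, xs ! 1) \<in> R))"
proof -
  obtain c where c: "\<And>x y. eval c [x, y] (if (x, y) \<in> R then 1 else 0)"
    using assms unfolding computable_rel_def by blast
  have "eval c xs (of_bool ((xs ! 0, xs ! 1) \<in> R))" if "length xs = Suc (Suc 0)" for xs
  proof -
    from that obtain a b where "xs = [a, b]" by (auto simp: length_Suc_conv)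
    then show ?thesis using c[of a b] by (simp add: of_bool_def)
  qed
  then show ?thesis unfolding rc_def by blast
qed

lemma cset_UNIV: "computable_set UNIV"
  unfolding computable_set_def using eval_kc[of 1] by auto

section \<open>Equivalence structures with classes of size at most two\<close>

definition c2 :: "(nat \<times> nat) set \<Rightarrow> bool" where
  "c2 R \<longleftrightarrow> equiv UNIV R \<and> (\<forall>x y z. (x, y) \<in> R \<longrightarrow> (x, z) \<in> R \<longrightarrow> x = y \<or> x = z \<or> y = z)"
definition sing :: "(nat \<times> nat) set \<Rightarrow> nat \<Rightarrow> bool" where
  "sing R x \<longleftrightarrow> (\<forall>y. (x, y) \<in> R \<longrightarrow> y = x)"
definition pmin :: "(nat \<times> nat) set \<Rightarrow> nat \<Rightarrow> bool" where
  "pmin R x \<longleftrightarrow> (\<exists>y. x < y \<and> (x, y) \<in> R)"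
definition partner :: "(nat \<times> nat) set \<Rightarrow> nat \<Rightarrow> nat" where
  "partner R x = (THE y. y \<noteq> x \<and> (x, y) \<in> R)"

lemma c2_sym: "c2 R \<Longrightarrow> (x, y) \<in> R \<Longrightarrow> (y, x) \<in> R"
  unfolding c2_def equiv_def sym_def by blast
lemma c2_trans: "c2 R \<Longrightarrow> (x, y) \<in> R \<Longrightarrow> (y, z) \<in> R \<Longrightarrow> (x, z) \<in> R"
  unfolding c2_def equiv_def trans_def by blast
lemma c2_refl: "c2 R \<Longrightarrow> (x, x) \<in> R"
  unfolding c2_def equiv_def refl_on_def by blast

lemma partner_prop:
  assumes "c2 R" "\<not> sing R x"
  shows "partner R x \<noteq> x \<and> (x, partner R x) \<in> R"
proof -
  obtain y where y: "y \<noteq> x" "(x, y) \<in> R" using assms(2) unfolding sing_def by blast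
  have u: "z = y" if "z \<noteq> x" "(x, z) \<in> R" for z
    using assms(1) y that unfolding c2_def by blast
  show ?thesis unfolding partner_def
    by (rule theI[of _ y]) (use y u in blast)+
qed

lemma rel_iff: "c2 R \<Longrightarrow> (x, y) \<in> R \<longleftrightarrow> x = y \<or> (\<not> sing R x \<and> y = partner R x)"
proof -
  assume c: "c2 R"
  show ?thesis
  proof
    assume xy: "(x, y) \<in> R"
    show "x = y \<or> (\<not> sing R x \<and> y = partner R x)"
    proof (cases "x = y")
      case False
      then have ns: "\<not> sing R x" using xy unfolding sing_def by blast
      then have "partner R x \<noteq> x" "(x, partner R x) \<in> R" using partner_prop[OF c] by auto
      moreover have "\<forall>x y z. (x, y) \<in> R \<longrightarrow> (x, z) \<in> R \<longrightarrow> x = y \<or> x = z \<or> y = z"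
        using c by (simp add: c2_def)
      ultimately have "y = partner R x" using xy False by metis
      then show ?thesis using ns by blast
    qed simp
  next
    assume "x = y \<or> (\<not> sing R x \<and> y = partner R x)"
    then show "(x, y) \<in> R" using c2_refl[OF c] partner_prop[OF c] by auto
  qed
qed

lemma partner_sing: "c2 R \<Longrightarrow> \<not> sing R x \<Longrightarrow> \<not> sing R (partner R x)"
  using partner_prop c2_sym unfolding sing_def by metis

lemma partner_partner: "c2 R \<Longrightarrow> \<not> sing R x \<Longrightarrow> partner R (partner R x) = x"
proof -
  assume c: "c2 R" and ns: "\<not> sing R x"
  have p: "partner R x \<noteq> x" "(x, partner R x) \<in> R" using partner_prop[OF c ns] by auto
  have "(partner R x, x) \<in> R" using c2_sym[OF c p(2)] .
  then show ?thesis using rel_iff[OF c, of "partner R x" x] p(1) by auto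
qed

lemma pmin_iff: assumes c: "c2 R" shows "pmin R x \<longleftrightarrow> \<not> sing R x \<and> x < partner R x"
proof
  assume "pmin R x"
  then obtain y where y: "x < y" "(x, y) \<in> R" by (auto simp: pmin_def)
  then have "\<not> sing R x \<and> y = partner R x" using rel_iff[OF c, of x y] by auto
  then show "\<not> sing R x \<and> x < partner R x" using y(1) by auto
next
  assume a: "\<not> sing R x \<and> x < partner R x"
  then have "(x, partner R x) \<in> R" using partner_prop[OF c] by blast
  then show "pmin R x" using a unfolding pmin_def by blast
qed

lemma sing_rel: "c2 R \<Longrightarrow> sing R x \<Longrightarrow> (x, y) \<in> R \<longleftrightarrow> y = x"
  unfolding sing_def using c2_refl by blast

lemma iso_c2:
  assumes cE: "c2 E" and cF: "c2 F"
    and iSE: "infinite {x. sing E x}" and iPE: "infinite {x. pmin E x}"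
    and iSF: "infinite {x. sing F x}" and iPF: "infinite {x. pmin F x}"
  shows "\<exists>f. isomorphism f UNIV E UNIV F"
proof -
  let ?SE = "{x. sing E x}" and ?PE = "{x. pmin E x}" and ?SF = "{x. sing F x}" and ?PF = "{x. pmin F x}"
  have b1: "bij_betw (enumerate ?SF \<circ> inv_into UNIV (enumerate ?SE)) ?SE ?SF"
    by (rule bij_betw_trans[OF bij_betw_inv_into[OF bij_enumerate[OF iSE]] bij_enumerate[OF iSF]])
  have b2: "bij_betw (enumerate ?PF \<circ> inv_into UNIV (enumerate ?PE)) ?PE ?PF"
    by (rule bij_betw_trans[OF bij_betw_inv_into[OF bij_enumerate[OF iPE]] bij_enumerate[OF iPF]])
  obtain bS where bS: "bij_betw bS ?SE ?SF" using b1 by blast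
  obtain bP where bP: "bij_betw bP ?PE ?PF" using b2 by blast
  define f where "f x = (if sing E x then bS x else if pmin E x then bP x else partner F (bP (partner E x)))" for x
  have bSin: "sing F (bS x)" if "sing E x" for x using bS that by (auto simp: bij_betw_def)
  have bPin: "pmin F (bP x)" if "pmin E x" for x using bP that by (auto simp: bij_betw_def)
  have nspF: "\<not> sing F y" if "pmin F y" for y using that pmin_iff[OF cF] by blast
  have nspE: "\<not> sing E y" if "pmin E y" for y using that pmin_iff[OF cE] by blast
  have maxE: "pmin E (partner E x)" if "\<not> sing E x" "\<not> pmin E x" for x
  proof -
    have "partner E x \<noteq> x" using partner_prop[OF cE that(1)] by blast
    then have "partner E x < x" using that(2) pmin_iff[OF cE] that(1) by auto
    then show ?thesis using pmin_iff[OF cE] partner_sing[OF cE that(1)] partner_partner[OF cE that(1)] by auto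
  qed
  have maxF: "\<not> pmin F (partner F y)" if "pmin F y" for y
    using that pmin_iff[OF cF] partner_sing[OF cF] partner_partner[OF cF] by (metis less_asym)
  have maxF2: "\<not> pmin F y" if "\<not> sing F y" "pmin F (partner F y)" for y
    using that pmin_iff[OF cF] partner_partner[OF cF] by (metis less_asym)
  have nsf: "sing F (f x) \<longleftrightarrow> sing E x" for x
  proof (cases "sing E x")
    case True then show ?thesis by (simp add: f_def bSin)
  next
    case False
    show ?thesis
    proof (cases "pmin E x")
      case True then show ?thesis using False by (simp add: f_def nspF bPin)
    next
      case False2: False
      then show ?thesis using False maxE[OF False False2] bPin nspF partner_sing[OF cF]
        by (simp add: f_def)
    qed
  qed
  have fp: "f (partner E x) = partner F (f x)" if ns: "\<not> sing E x" for x
  proof (cases "pmin E x")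
    case True
    have ns2: "\<not> sing E (partner E x)" using partner_sing[OF cE ns] .
    have np: "\<not> pmin E (partner E x)"
      using True pmin_iff[OF cE] partner_partner[OF cE ns] ns2 by (metis less_asym)
    show ?thesis using True ns ns2 np by (simp add: f_def partner_partner[OF cE ns])
  next
    case False
    have mp: "pmin E (partner E x)" using maxE[OF ns False] .
    have "partner F (f x) = partner F (partner F (bP (partner E x)))" using ns False by (simp add: f_def)
    also have "\<dots> = bP (partner E x)" using partner_partner[OF cF nspF[OF bPin[OF mp]]] .
    finally show ?thesis using mp nspE[OF mp] by (simp add: f_def)
  qed
  have finj: "inj f"
  proof (rule injI)
    fix x y assume fxy: "f x = f y"
    consider "sing E x" | "pmin E x" | "\<not> sing E x" "\<not> pmin E x" by blast
    then show "x = y"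
    proof cases
      case 1
      then have "sing E y" using nsf[of x] nsf[of y] fxy by simp
      then show ?thesis using 1 fxy bS by (simp add: f_def bij_betw_def inj_on_def)
    next
      case 2
      have nsy: "\<not> sing E y" using nsf[of x] nsf[of y] fxy nspE[OF 2] by simp
      have "pmin F (f x)" using 2 bPin nspE by (simp add: f_def)
      then have py: "pmin E y"
        using fxy nsy maxE[OF nsy] bPin maxF by (auto simp: f_def split: if_splits)
      then show ?thesis using 2 fxy bP nspE by (simp add: f_def bij_betw_def inj_on_def)
    next
      case 3
      have nsy: "\<not> sing E y" using nsf[of x] nsf[of y] fxy 3 by simp
      have "\<not> pmin F (f x)" using 3 maxE[OF 3] bPin maxF by (simp add: f_def)
      then have py: "\<not> pmin E y" using fxy nsy bPin nspE by (auto simp: f_def)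
      have "partner F (f x) = partner F (f y)" using fxy by simp
      then have "f (partner E x) = f (partner E y)" using fp 3 nsy by simp
      then have "bP (partner E x) = bP (partner E y)" using maxE[OF 3] maxE[OF nsy py] nspE
        by (simp add: f_def)
      then have "partner E x = partner E y" using bP maxE[OF 3] maxE[OF nsy py]
        by (auto simp: bij_betw_def inj_on_def)
      then show ?thesis using partner_partner[OF cE] 3 nsy by metis
    qed
  qed
  have fsurj: "f ` UNIV = UNIV"
  proof (intro set_eqI iffI)
    fix y :: nat
    show "y \<in> f ` UNIV"
    proof (cases "sing F y")
      case True
      then have "y \<in> bS ` ?SE" using bS by (simp add: bij_betw_def)
      then obtain x where "sing E x" "bS x = y" by blast
      then show ?thesis by (metis f_def rangeI)
    next
      case False
      show ?thesis
      proof (cases "pmin F y")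
        case True
        then have "y \<in> bP ` ?PE" using bP by (simp add: bij_betw_def)
        then obtain x where "pmin E x" "bP x = y" by blast
        then show ?thesis using nspE by (metis f_def rangeI)
      next
        case False2: False
        have "pmin F (partner F y)"
        proof -
          have "partner F y \<noteq> y" using partner_prop[OF cF False] by blast
          then have "partner F y < y" using False2 pmin_iff[OF cF] False by auto
          then show ?thesis using pmin_iff[OF cF] partner_sing[OF cF False] partner_partner[OF cF False] by auto
        qed
        then have "partner F y \<in> bP ` ?PE" using bP by (simp add: bij_betw_def)
        then obtain x' where x': "pmin E x'" "bP x' = partner F y" by auto
        have "f x' = partner F y" using x' nspE by (simp add: f_def)
        then have "f (partner E x') = y" using fp[OF nspE[OF x'(1)]] partner_partner[OF cF False] by simp
        then show ?thesis by (metis rangeI)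
      qed
    qed
  qed simp
  have frel: "(x, y) \<in> E \<longleftrightarrow> (f x, f y) \<in> F" for x y
  proof -
    have "(x, y) \<in> E \<longleftrightarrow> x = y \<or> (\<not> sing E x \<and> y = partner E x)" by (rule rel_iff[OF cE])
    also have "\<dots> \<longleftrightarrow> f x = f y \<or> (\<not> sing F (f x) \<and> f y = partner F (f x))"
      using finj nsf fp by (metis injD)
    also have "\<dots> \<longleftrightarrow> (f x, f y) \<in> F" by (rule rel_iff[OF cF, symmetric])
    finally show ?thesis .
  qed
  have "embedding f UNIV E UNIV F" unfolding embedding_def using finj frel by simp
  then have "isomorphism f UNIV E UNIV F" unfolding isomorphism_def using fsurj by simp
  then show ?thesis by blast
qed

lemma infinite_range_sub: fixes g :: "nat \<Rightarrow> nat" assumes "inj g" "\<And>k. g k \<in> S" shows "infinite S"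
proof -
  have "range g \<subseteq> S" using assms(2) by auto
  moreover have "infinite (range g)" using assms(1) by (rule range_inj_infinite)
  ultimately show ?thesis by (rule infinite_super)
qed

definition pr12 :: "nat \<Rightarrow> nat \<Rightarrow> bool" where
  "pr12 x y \<longleftrightarrow> (p1 x = 1 \<or> p1 x = 2) \<and> (p1 y = 1 \<or> p1 y = 2) \<and> p2 x = p2 y"

definition Erel :: "(nat \<times> nat) set" where
  "Erel = {(x, y). x = y \<or> pr12 x y}"

definition fs :: "nat \<Rightarrow> nat \<Rightarrow> bool" where
  "fs e s \<longleftrightarrow> Tr e s \<and> (\<forall>s'<s. \<not> Tr e s')"

definition lnk :: "nat \<Rightarrow> nat \<Rightarrow> bool" where
  "lnk x y \<longleftrightarrow> p1 x = 3 \<and> p1 y = 4 \<and> p1 (p2 y) = p2 x \<and> fs (p2 x) (p2 (p2 y))"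

definition Frel :: "(nat \<times> nat) set" where
  "Frel = {(x, y). x = y \<or> pr12 x y \<or> lnk x y \<or> lnk y x}"

lemma p_eq: "p1 x = p1 y \<Longrightarrow> p2 x = p2 y \<Longrightarrow> x = y" by (metis pe_p)

lemma fs_unique: "fs e s \<Longrightarrow> fs e s' \<Longrightarrow> s = s'"
  unfolding fs_def by (metis linorder_neqE_nat)

lemma lnk_fun1: "lnk x y \<Longrightarrow> lnk x y' \<Longrightarrow> y = y'"
  unfolding lnk_def by (metis fs_unique p_eq)
lemma lnk_fun2: "lnk x y \<Longrightarrow> lnk x' y \<Longrightarrow> x = x'"
  unfolding lnk_def by (metis p_eq)

lemma pr12_sym: "pr12 x y \<Longrightarrow> pr12 y x" unfolding pr12_def by auto
lemma pr12_trans: "pr12 x y \<Longrightarrow> pr12 y z \<Longrightarrow> pr12 x z" unfolding pr12_def by auto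
lemma pr12_small: "pr12 x y \<Longrightarrow> pr12 x z \<Longrightarrow> x = y \<or> x = z \<or> y = z"
  unfolding pr12_def by (metis p_eq)
lemma pr12_lnk: "pr12 x y \<Longrightarrow> \<not> lnk x z \<and> \<not> lnk z x \<and> \<not> lnk y z \<and> \<not> lnk z y"
  unfolding pr12_def lnk_def by auto
lemma lnk_tags: "lnk x y \<Longrightarrow> p1 x = 3 \<and> p1 y = 4" unfolding lnk_def by auto

lemma c2_Erel: "c2 Erel"
proof -
  have r: "refl_on UNIV Erel" by (simp add: refl_on_def Erel_def)
  have s: "sym Erel" unfolding sym_def Erel_def using pr12_sym by blast
  have t: "trans Erel" unfolding trans_def Erel_def using pr12_trans by blast
  have m: "\<forall>x y z. (x, y) \<in> Erel \<longrightarrow> (x, z) \<in> Erel \<longrightarrow> x = y \<or> x = z \<or> y = z"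
    unfolding Erel_def using pr12_small by blast
  show ?thesis unfolding c2_def equiv_def using r s t m by auto
qed

lemma c2_Frel: "c2 Frel"
proof -
  have tr: "(x, z) \<in> Frel" if "(x, y) \<in> Frel" "(y, z) \<in> Frel" for x y z
  proof -
    have a: "x = y \<or> pr12 x y \<or> lnk x y \<or> lnk y x" and b: "y = z \<or> pr12 y z \<or> lnk y z \<or> lnk z y"
      using that by (auto simp: Frel_def)
    show ?thesis using a b pr12_trans pr12_lnk lnk_fun1 lnk_fun2 lnk_tags pr12_sym
      unfolding Frel_def by (smt (verit, best) case_prodI mem_Collect_eq numeral_eq_iff semiring_norm(89))
  qed
  have sm: "x = y \<or> x = z \<or> y = z" if "(x, y) \<in> Frel" "(x, z) \<in> Frel" for x y z
  proof -
    have a: "x = y \<or> pr12 x y \<or> lnk x y \<or> lnk y x" and b: "x = z \<or> pr12 x z \<or> lnk x z \<or> lnk z x"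
      using that by (auto simp: Frel_def)
    show ?thesis using a b pr12_small pr12_lnk lnk_fun1 lnk_fun2 lnk_tags pr12_sym
      by (metis numeral_eq_iff semiring_norm(89))
  qed
  have r: "refl_on UNIV Frel" by (simp add: refl_on_def Frel_def)
  have s: "sym Frel" unfolding sym_def Frel_def using pr12_sym by blast
  have t: "trans Frel" unfolding trans_def using tr by blast
  show ?thesis unfolding c2_def equiv_def using r s t sm by auto
qed

lemma pe12_less: "pe 1 k < pe 2 k" by (simp add: pe_def prod_encode_def)

lemma sing_pe0: "sing Erel (pe 0 k)" "sing Frel (pe 0 k)"
  by (auto simp: sing_def Erel_def Frel_def pr12_def lnk_def)
lemma pmin_pe1: "pmin Erel (pe 1 k)" "pmin Frel (pe 1 k)"
  unfolding pmin_def using pe12_less[of k]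
  by (auto simp: Erel_def Frel_def pr12_def intro!: exI[of _ "pe 2 k"])

lemma pmin_pe1': "pmin Erel (pe (Suc 0) k)" "pmin Frel (pe (Suc 0) k)"
  using pmin_pe1 by simp_all

lemma inj_pe0: "inj (\<lambda>k. pe 0 k)" "inj (\<lambda>k. pe 1 k)" by (auto intro: injI)

lemma iso_EF: "isomorphic UNIV Erel UNIV Frel"
proof -
  have "infinite {x. sing Erel x}" by (rule infinite_range_sub[OF inj_pe0(1)]) (simp add: sing_pe0)
  moreover have "infinite {x. sing Frel x}" by (rule infinite_range_sub[OF inj_pe0(1)]) (simp add: sing_pe0)
  moreover have "infinite {x. pmin Erel x}" by (rule infinite_range_sub[OF inj_pe0(2)]) (simp add: pmin_pe1 pmin_pe1')
  moreover have "infinite {x. pmin Frel x}" by (rule infinite_range_sub[OF inj_pe0(2)]) (simp add: pmin_pe1 pmin_pe1')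
  ultimately show ?thesis unfolding isomorphic_def by (intro iso_c2[OF c2_Erel c2_Frel])
qed

definition TRx :: "ex \<Rightarrow> ex \<Rightarrow> ex" where "TRx a b = Fn (\<lambda>xs. of_bool (Tr (xs!0) (xs!1))) [a, b]"
lemma wfx_TRx[simp]: "wfx (TRx a b) = (wfx a \<and> wfx b)" using rc_Tr by (auto simp: TRx_def)
lemma evx_TRx[simp]: "evx env (TRx a b) = of_bool (Tr (evx env a) (evx env b))" by (simp add: TRx_def)

lemma rc_fs: "rc (Suc (Suc 0)) (\<lambda>xs. of_bool (fs (xs!0) (xs!1)))"
  by (rule rc2I[where e="andx (TRx (V 0) (V 1)) (allx (V 1) (nt (TRx (V 1) (V 0))))"]) (auto simp: fs_def)

definition FSx :: "ex \<Rightarrow> ex \<Rightarrow> ex" where "FSx a b = Fn (\<lambda>xs. of_bool (fs (xs!0) (xs!1))) [a, b]"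
lemma wfx_FSx[simp]: "wfx (FSx a b) = (wfx a \<and> wfx b)" using rc_fs by (auto simp: FSx_def)
lemma evx_FSx[simp]: "evx env (FSx a b) = of_bool (fs (evx env a) (evx env b))" by (simp add: FSx_def)

definition pr12x :: "ex \<Rightarrow> ex \<Rightarrow> ex" where
  "pr12x a b = andx (orx (eqx (P1x a) (K 1)) (eqx (P1x a) (K 2)))
      (andx (orx (eqx (P1x b) (K 1)) (eqx (P1x b) (K 2))) (eqx (P2x a) (P2x b)))"
lemma wfx_pr12x[simp]: "wfx (pr12x a b) = (wfx a \<and> wfx b)" by (auto simp: pr12x_def)
lemma evx_pr12x[simp]: "evx env (pr12x a b) = of_bool (pr12 (evx env a) (evx env b))"
  by (simp add: pr12x_def pr12_def)

definition lnkx :: "ex \<Rightarrow> ex \<Rightarrow> ex" where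
  "lnkx a b = andx (eqx (P1x a) (K 3)) (andx (eqx (P1x b) (K 4))
      (andx (eqx (P1x (P2x b)) (P2x a)) (FSx (P2x a) (P2x (P2x b)))))"
lemma wfx_lnkx[simp]: "wfx (lnkx a b) = (wfx a \<and> wfx b)" by (auto simp: lnkx_def)
lemma evx_lnkx[simp]: "evx env (lnkx a b) = of_bool (lnk (evx env a) (evx env b))"
  by (simp add: lnkx_def lnk_def)

lemma crel_Erel: "computable_rel Erel"
  by (rule rc2_crel, rule rc2I[where e="orx (eqx (V 0) (V 1)) (pr12x (V 0) (V 1))"]) (auto simp: Erel_def)

lemma crel_Frel: "computable_rel Frel"
  by (rule rc2_crel, rule rc2I[where e="orx (eqx (V 0) (V 1)) (orx (pr12x (V 0) (V 1))
     (orx (lnkx (V 0) (V 1)) (lnkx (V 1) (V 0))))"]) (auto simp: Frel_def)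

lemma ces_Erel: "computable_eq_struct UNIV Erel"
  using c2_Erel crel_Erel cset_UNIV by (simp add: computable_eq_struct_def eq_struct_def c2_def)
lemma ces_Frel: "computable_eq_struct UNIV Frel"
  using c2_Frel crel_Frel cset_UNIV by (simp add: computable_eq_struct_def eq_struct_def c2_def)

section \<open>Not computably categorical\<close>

lemma no_comp_iso:
  assumes hc: "computable_fun h" and hi: "isomorphism h UNIV Frel UNIV Erel"
  shows False
proof -
  have inj: "inj h" and sur: "h ` UNIV = UNIV" and rel: "\<And>x y. (x, y) \<in> Frel \<longleftrightarrow> (h x, h y) \<in> Erel"
    using hi unfolding isomorphism_def embedding_def by auto
  have key: "(\<exists>s. Tr e s) \<longleftrightarrow> (p1 (h (pe 3 e)) = 1 \<or> p1 (h (pe 3 e)) = 2)" for e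
  proof
    assume "\<exists>s. Tr e s"
    define s0 where "s0 = (LEAST s. Tr e s)"
    have "fs e s0" unfolding fs_def s0_def using \<open>\<exists>s. Tr e s\<close> by (metis LeastI not_less_Least)
    then have "lnk (pe 3 e) (pe 4 (pe e s0))" by (simp add: lnk_def)
    then have "(pe 3 e, pe 4 (pe e s0)) \<in> Frel" by (simp add: Frel_def)
    then have "(h (pe 3 e), h (pe 4 (pe e s0))) \<in> Erel" using rel by blast
    moreover have "h (pe 3 e) \<noteq> h (pe 4 (pe e s0))" using inj by (simp add: inj_eq)
    ultimately show "p1 (h (pe 3 e)) = 1 \<or> p1 (h (pe 3 e)) = 2" by (auto simp: Erel_def pr12_def)
  next
    assume t: "p1 (h (pe 3 e)) = 1 \<or> p1 (h (pe 3 e)) = 2"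
    let ?a = "h (pe 3 e)"
    define z where "z = pe (3 - p1 ?a) (p2 ?a)"
    have "(?a, z) \<in> Erel" using t by (auto simp: z_def Erel_def pr12_def)
    have "p1 z = 3 - p1 ?a" by (simp add: z_def)
    then have "p1 z \<noteq> p1 ?a" using t by auto
    then have "z \<noteq> ?a" by auto
    obtain y where y: "h y = z" using sur by (metis UNIV_I imageE)
    have "(pe 3 e, y) \<in> Frel" using rel \<open>(?a, z) \<in> Erel\<close> y by simp
    moreover have "y \<noteq> pe 3 e" using y \<open>z \<noteq> ?a\<close> by auto
    ultimately have "lnk (pe 3 e) y" by (auto simp: Frel_def pr12_def lnk_def)
    then show "\<exists>s. Tr e s" by (auto simp: lnk_def fs_def)
  qed
  have "rc (Suc 0) (\<lambda>xs. of_bool (\<exists>s. Tr (xs!0) s))"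
    using cf_rc1[OF hc]
    by (intro rc1I[where e="orx (eqx (P1x (Fn (\<lambda>xs. h (xs ! 0)) [pex (K 3) (V 0)])) (K 1))
        (eqx (P1x (Fn (\<lambda>xs. h (xs ! 0)) [pex (K 3) (V 0)])) (K 2))"]) (auto simp: key)
  then have "\<exists>c. \<forall>x. eval c [x] (of_bool (\<exists>s. Tr x s))"
    using rc1_cf unfolding computable_fun_def by fastforce
  then show False using K_undec by blast
qed

lemma not_cc: "\<not> comp_categorical UNIV Erel"
  unfolding comp_categorical_def using ces_Frel iso_EF no_comp_iso by blast


section \<open>Computable bi-embeddability\<close>

lemma sum_least: assumes "\<exists>j\<le>x. P j"
  shows "(\<Sum>i<Suc x. of_bool (\<forall>j<Suc i. \<not> P j) :: nat) = (LEAST j. P j)"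
proof -
  let ?w = "LEAST j. P j"
  have Pw: "P ?w" using assms by (metis LeastI)
  have wx: "?w \<le> x" using assms by (metis Least_le le_trans)
  have "(\<forall>j<Suc i. \<not> P j) \<longleftrightarrow> i < ?w" for i
  proof
    assume "\<forall>j<Suc i. \<not> P j"
    then show "i < ?w" using Pw by (metis not_less less_Suc_eq_le)
  next
    assume "i < ?w"
    then show "\<forall>j<Suc i. \<not> P j" using not_less_Least by (metis less_Suc_eq_le le_less_trans)
  qed
  then have "(\<Sum>i<Suc x. of_bool (\<forall>j<Suc i. \<not> P j) :: nat) = (\<Sum>i<Suc x. of_bool (i < ?w))" by simp
  also have "\<dots> = ?w" using wx by (intro sum_ofbool_less) simp
  finally show ?thesis .
qed

context
  fixes G :: "nat set" and R :: "(nat \<times> nat) set" and \<phi> \<psi> :: "nat \<Rightarrow> nat"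
  assumes eqG: "equiv G R" and crR: "computable_rel R"
    and phi: "embedding \<phi> UNIV Erel G R" and psi: "embedding \<psi> G R UNIV Erel"
begin

lemma R_sub: "(x, y) \<in> R \<Longrightarrow> x \<in> G \<and> y \<in> G"
  using eqG unfolding equiv_def refl_on_def by blast
lemma R_refl: "x \<in> G \<Longrightarrow> (x, x) \<in> R"
  using eqG unfolding equiv_def refl_on_def by blast
lemma R_sym: "(x, y) \<in> R \<Longrightarrow> (y, x) \<in> R"
  using eqG unfolding equiv_def sym_def by blast
lemma R_trans: "(x, y) \<in> R \<Longrightarrow> (y, z) \<in> R \<Longrightarrow> (x, z) \<in> R"
  using eqG unfolding equiv_def trans_def by blast

lemma small: assumes "(x, y) \<in> R" "(x, z) \<in> R" shows "x = y \<or> x = z \<or> y = z"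
proof -
  have G: "x \<in> G" "y \<in> G" "z \<in> G" using assms R_sub by auto
  have "(\<psi> x, \<psi> y) \<in> Erel" "(\<psi> x, \<psi> z) \<in> Erel" using psi assms G unfolding embedding_def by auto
  then have "\<psi> x = \<psi> y \<or> \<psi> x = \<psi> z \<or> \<psi> y = \<psi> z" using c2_Erel unfolding c2_def by blast
  moreover have "inj_on \<psi> G" using psi unfolding embedding_def by blast
  ultimately show ?thesis using G by (metis inj_onD)
qed

lemma rcR: "rc (Suc (Suc 0)) (\<lambda>xs. of_bool ((xs ! 0, xs ! 1) \<in> R))"
  using crel_rc2[OF crR] .

definition Rx :: "ex \<Rightarrow> ex \<Rightarrow> ex" where "Rx a b = Fn (\<lambda>xs. of_bool ((xs ! 0, xs ! 1) \<in> R)) [a, b]"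
lemma wfx_Rx[simp]: "wfx (Rx a b) = (wfx a \<and> wfx b)" using rcR by (auto simp: Rx_def)
lemma evx_Rx[simp]: "evx env (Rx a b) = of_bool ((evx env a, evx env b) \<in> R)" by (simp add: Rx_def)

definition mu :: "nat \<Rightarrow> nat" where
  "mu x = (\<Sum>i<Suc x. of_bool (\<forall>j<Suc i. (j, x) \<notin> R))"

lemma mu_least: "x \<in> G \<Longrightarrow> mu x = (LEAST y. (y, x) \<in> R)"
  unfolding mu_def by (rule sum_least) (use R_refl in blast)

lemma mu_rel: "x \<in> G \<Longrightarrow> (mu x, x) \<in> R"
  using mu_least R_refl by (metis LeastI)

lemma mu_eq_iff: "x \<in> G \<Longrightarrow> y \<in> G \<Longrightarrow> mu x = mu y \<longleftrightarrow> (x, y) \<in> R"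
proof
  assume G: "x \<in> G" "y \<in> G" and m: "mu x = mu y"
  have "(mu x, x) \<in> R" by (rule mu_rel[OF G(1)])
  moreover have "(mu x, y) \<in> R" using mu_rel[OF G(2)] m by simp
  ultimately show "(x, y) \<in> R" using R_sym R_trans by blast
next
  assume G: "x \<in> G" "y \<in> G" and xy: "(x, y) \<in> R"
  have "(\<lambda>z. (z, x) \<in> R) = (\<lambda>z. (z, y) \<in> R)"
    using xy R_sym R_trans by (metis)
  then show "mu x = mu y" using G by (simp add: mu_least)
qed

definition gfun :: "nat \<Rightarrow> nat" where
  "gfun x = (if mu x = x then pe 1 (mu x) else pe 2 (mu x))"

definition Mx :: ex where
  "Mx = Su (Pl (V 0) (K 1)) (allx (Pl (V 0) (K 1)) (nt (Rx (V 0) (V 2))))"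

lemma evx_Mx: "evx [x] Mx = mu x"
  by (simp add: Mx_def mu_def)

lemma wfx_Mx: "wfx Mx" by (simp add: Mx_def)

lemma gfun_comp: "computable_fun gfun"
proof -
  have "rc (Suc 0) (\<lambda>xs. gfun (xs ! 0))"
    by (rule rc1I[where e="ifx (eqx Mx (V 0)) (pex (K 2) Mx) (pex (K 1) Mx)"])
       (auto simp: wfx_Mx evx_Mx gfun_def)
  from rc1_cf[OF this] show ?thesis by simp
qed

lemma gfun_emb: "embedding gfun G R UNIV Erel"
proof -
  have rel: "(x, y) \<in> R \<longleftrightarrow> (gfun x, gfun y) \<in> Erel" if G: "x \<in> G" "y \<in> G" for x y
  proof -
    have "(gfun x, gfun y) \<in> Erel \<longleftrightarrow> mu x = mu y"
      by (auto simp: gfun_def Erel_def pr12_def)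
    then show ?thesis using mu_eq_iff G by simp
  qed
  have inj: "inj_on gfun G"
  proof (rule inj_onI)
    fix x y assume G: "x \<in> G" "y \<in> G" and e: "gfun x = gfun y"
    then have m: "mu x = mu y" by (auto simp: gfun_def split: if_splits)
    have c: "mu x = x \<longleftrightarrow> mu y = y" using e by (auto simp: gfun_def split: if_splits)
    show "x = y"
    proof (cases "mu x = x")
      case True then show ?thesis using m c by simp
    next
      case False
      then have "mu x \<noteq> x" "mu x \<noteq> y" using c m by auto
      moreover have "(mu x, x) \<in> R" by (rule mu_rel[OF G(1)])
      moreover have "(mu x, y) \<in> R" using mu_rel[OF G(2)] m by simp
      ultimately show ?thesis using small by blast
    qed
  qed
  show ?thesis unfolding embedding_def using rel inj by auto
qed

definition Pc :: "nat \<Rightarrow> bool" where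
  "Pc z \<longleftrightarrow> p1 z < p2 z \<and> (p1 z, p2 z) \<in> R"

lemma Pc_inf: "infinite {z. Pc z}"
proof -
  define a where "a k = \<phi> (pe 1 k)" for k
  define b where "b k = \<phi> (pe 2 k)" for k
  have injphi: "inj \<phi>" using phi unfolding embedding_def by simp
  have ab: "a k \<noteq> b k" for k using injphi by (simp add: a_def b_def inj_eq)
  have rab: "(a k, b k) \<in> R" for k
  proof -
    have "(pe 1 k, pe 2 k) \<in> Erel" by (simp add: Erel_def pr12_def)
    then show ?thesis using phi unfolding embedding_def a_def b_def by blast
  qed
  define g where "g k = pe (min (a k) (b k)) (max (a k) (b k))" for k
  have "g k \<in> {z. Pc z}" for k
    using ab[of k] rab[of k] R_sym by (auto simp: g_def Pc_def min_def max_def)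
  moreover have "inj g"
  proof (rule injI)
    fix k k' assume "g k = g k'"
    then have e: "min (a k) (b k) = min (a k') (b k')" "max (a k) (b k) = max (a k') (b k')"
      by (auto simp: g_def)
    then have "a k = a k' \<or> a k = b k'" by (metis max_def min_def)
    then have "pe 1 k = pe 1 k' \<or> pe 1 k = pe 2 k'" using injphi by (auto simp: a_def b_def inj_eq)
    then show "k = k'" by simp
  qed
  ultimately show ?thesis by (intro infinite_range_sub[of g]) auto
qed

lemma ex_Pc: "\<exists>z. w \<le> z \<and> Pc z"
  using Pc_inf by (simp add: infinite_nat_iff_unbounded_le)

definition nxt :: "nat \<Rightarrow> nat" where "nxt w = (LEAST z. w \<le> z \<and> Pc z)"

lemma nxt: "w \<le> nxt w" "Pc (nxt w)"
  using LeastI_ex[OF ex_Pc[of w]] by (auto simp: nxt_def)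
lemma nxt_least: "m < nxt w \<Longrightarrow> \<not> (w \<le> m \<and> Pc m)"
  unfolding nxt_def using not_less_Least by blast

primrec rr :: "nat \<Rightarrow> nat" where
  "rr 0 = nxt 0"
| "rr (Suc k) = nxt (Suc (rr k))"

lemma rr_Pc: "Pc (rr k)" by (cases k) (auto simp: nxt)
lemma rr_step: "rr k < rr (Suc k)" using nxt(1)[of "Suc (rr k)"] by simp
lemma rr_mono: "strict_mono rr" unfolding strict_mono_Suc_iff using rr_step by blast
lemma rr_inj: "inj rr" using rr_mono strict_mono_imp_inj_on by blast

lemma rc_Pc: "rc (Suc 0) (\<lambda>xs. of_bool (Pc (xs ! 0)))"
  by (rule rc1I[where e="andx (ltx (P1x (V 0)) (P2x (V 0))) (Rx (P1x (V 0)) (P2x (V 0)))"]) (auto simp: Pc_def)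

lemma rc_q: "rc (Suc (Suc 0)) (\<lambda>xs. of_bool (\<not> (xs ! 1 \<le> xs ! 0 \<and> Pc (xs ! 0))))"
  using rc_Pc
  by (intro rc2I[where e="nt (andx (nt (ltx (V 0) (V 1))) (Fn (\<lambda>xs. of_bool (Pc (xs ! 0))) [V 0]))"])
     (auto simp: not_less)

lemma rr_comp: "computable_fun rr"
proof -
  obtain cq where cq: "\<And>xs. length xs = Suc (Suc 0) \<Longrightarrow> eval cq xs (of_bool (\<not> (xs ! 1 \<le> xs ! 0 \<and> Pc (xs ! 0))))"
    using rc_q unfolding rc_def by blast
  have mn: "eval (Mn cq) [w] (nxt w)" for w
  proof (rule eval_Mn)
    show "eval cq [nxt w, w] 0" using cq[of "[nxt w, w]"] nxt[of w] by simp
    show "\<forall>m<nxt w. \<exists>k. eval cq [m, w] (Suc k)"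
    proof (intro allI impI)
      fix m assume "m < nxt w"
      then have n: "\<not> (w \<le> m \<and> Pc m)" by (rule nxt_least)
      have "eval cq [m, w] (of_bool (\<not> (w \<le> m \<and> Pc m)))" using cq[of "[m, w]"] by simp
      then have "eval cq [m, w] (Suc 0)" using n by simp
      then show "\<exists>k. eval cq [m, w] (Suc k)" by blast
    qed
  qed
  define Rp where "Rp = Prec (Comp (Mn cq) [Zero]) (Comp (Mn cq) [Comp Succ [Proj 0]])"
  have "eval Rp [k] (rr k)" for k
  proof (induction k)
    case 0
    have "eval (Comp (Mn cq) [Zero]) [] (nxt 0)"
      by (rule eval_Comp[where ys="[0]"]) (auto intro: eval.intros mn)
    then show ?case unfolding Rp_def by (auto intro: eval_Prec0)
  next
    case (Suc k)
    have s: "eval (Comp Succ [Proj 0]) [rr k, k] (Suc (rr k))"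
      by (rule eval_Comp[where ys="[rr k]"]) (auto intro: eval.intros eval_Proj[of 0 "[rr k, k]", simplified])
    have "eval (Comp (Mn cq) [Comp Succ [Proj 0]]) [rr k, k] (nxt (Suc (rr k)))"
      by (rule eval_Comp[where ys="[Suc (rr k)]"]) (auto intro: s mn)
    then show ?case using Suc unfolding Rp_def by (auto intro: eval_PrecS)
  qed
  then show ?thesis unfolding computable_fun_def by blast
qed

definition sel :: "nat \<Rightarrow> nat \<Rightarrow> nat" where "sel x z = (if p1 x = 2 then p2 z else p1 z)"
definition idx :: "nat \<Rightarrow> nat" where "idx x = (if p1 x = 1 \<or> p1 x = 2 then 2 * p2 x + 1 else 2 * x)"
definition ffun :: "nat \<Rightarrow> nat" where "ffun x = sel x (rr (idx x))"

lemma ffun_comp: "computable_fun ffun"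
proof -
  have r: "rc (Suc 0) (\<lambda>xs. rr (xs ! 0))" using cf_rc1[OF rr_comp] .
  let ?RR = "\<lambda>a. Fn (\<lambda>xs. rr (xs ! 0)) [a]"
  let ?I = "ifx (orx (eqx (P1x (V 0)) (K 1)) (eqx (P1x (V 0)) (K 2))) (Ti (K 2) (V 0)) (Pl (Ti (K 2) (P2x (V 0))) (K 1))"
  have "rc (Suc 0) (\<lambda>xs. ffun (xs ! 0))"
    using r by (intro rc1I[where e="ifx (eqx (P1x (V 0)) (K 2)) (P1x (?RR ?I)) (P2x (?RR ?I))"])
       (auto simp: ffun_def sel_def idx_def)
  from rc1_cf[OF this] show ?thesis by simp
qed

lemma cls: assumes "Pc z" "Pc z'" "u \<in> {p1 z, p2 z}" "v \<in> {p1 z', p2 z'}"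
  shows "(u, v) \<in> R \<longleftrightarrow> z = z'"
proof
  have zz: "(p1 z, p2 z) \<in> R" "(p1 z', p2 z') \<in> R" "p1 z < p2 z" "p1 z' < p2 z'" using assms(1,2) by (auto simp: Pc_def)
  have Gs: "p1 z \<in> G" "p2 z \<in> G" "p1 z' \<in> G" "p2 z' \<in> G" using zz R_sub by auto
  {
    assume "z = z'"
    then show "(u, v) \<in> R" using assms(3,4) zz R_refl Gs R_sym by auto
  }
  assume uv: "(u, v) \<in> R"
  have a: "(p1 z, u) \<in> R" using assms(3) zz R_refl Gs by auto
  have b: "(v, p1 z') \<in> R" using assms(4) zz R_refl Gs R_sym by auto
  have c: "(p1 z, p1 z') \<in> R" using a uv b R_trans by blast
  have d: "(p1 z, p2 z') \<in> R" using c zz R_trans by blast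
  have e1: "p1 z' = p1 z \<or> p1 z' = p2 z" using small[OF zz(1) c] zz(3) by auto
  have e2: "p2 z' = p1 z \<or> p2 z' = p2 z" using small[OF zz(1) d] zz(3) by auto
  have "p1 z' = p1 z \<and> p2 z' = p2 z" using e1 e2 zz(3,4) by auto
  then show "z = z'" by (metis p_eq)
qed

lemma par: "2 * a + 1 \<noteq> 2 * (b::nat)" by presburger

lemma idx_iff: "idx x = idx y \<longleftrightarrow> (x, y) \<in> Erel"
proof (cases "p1 x = 1 \<or> p1 x = 2")
  case True
  show ?thesis
  proof (cases "p1 y = 1 \<or> p1 y = 2")
    case True2: True
    then show ?thesis using True by (auto simp: idx_def Erel_def pr12_def)
  next
    case False
    then have "x \<noteq> y" using True by auto
    then show ?thesis using True False par by (auto simp: idx_def Erel_def pr12_def)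
  qed
next
  case False
  show ?thesis
  proof (cases "p1 y = 1 \<or> p1 y = 2")
    case True2: True
    then have "x \<noteq> y" using False by auto
    then show ?thesis using False True2 par[of "p2 y" x] by (auto simp: idx_def Erel_def pr12_def)
  next
    case False2: False
    then show ?thesis using False by (auto simp: idx_def Erel_def pr12_def)
  qed
qed

lemma ffun_in: "ffun x \<in> {p1 (rr (idx x)), p2 (rr (idx x))}" by (simp add: ffun_def sel_def)

lemma ffun_rel: "(ffun x, ffun y) \<in> R \<longleftrightarrow> (x, y) \<in> Erel"
proof -
  have "(ffun x, ffun y) \<in> R \<longleftrightarrow> rr (idx x) = rr (idx y)" by (rule cls[OF rr_Pc rr_Pc ffun_in ffun_in])
  also have "\<dots> \<longleftrightarrow> idx x = idx y" using rr_inj by (simp add: inj_eq)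
  finally show ?thesis by (simp add: idx_iff)
qed

lemma ffun_G: "ffun x \<in> G"
  using ffun_in[of x] rr_Pc[of "idx x"] R_sub by (auto simp: Pc_def)

lemma ffun_emb: "embedding ffun UNIV Erel G R"
proof -
  have inj: "inj ffun"
  proof (rule injI)
    fix x y assume e: "ffun x = ffun y"
    then have "(ffun x, ffun y) \<in> R" using R_refl ffun_G by simp
    then have i: "idx x = idx y" using ffun_rel idx_iff by blast
    show "x = y"
    proof (cases "p1 x = 1 \<or> p1 x = 2")
      case False
      then have "\<not> (p1 y = 1 \<or> p1 y = 2)" using i unfolding idx_def by presburger
      then show ?thesis using i False unfolding idx_def by simp
    next
      case True
      then have y12: "p1 y = 1 \<or> p1 y = 2" using i unfolding idx_def by presburger
      then have p2e: "p2 x = p2 y" using i True unfolding idx_def by simp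
      have ne: "p1 (rr (idx x)) \<noteq> p2 (rr (idx x))" using rr_Pc[of "idx x"] by (simp add: Pc_def)
      have "sel x (rr (idx x)) = sel y (rr (idx x))" using e i by (simp add: ffun_def)
      then have "p1 x = 2 \<longleftrightarrow> p1 y = 2" using ne unfolding sel_def by (auto split: if_splits)
      then have "p1 x = p1 y" using True y12 by auto
      then show ?thesis using p2e p_eq by blast
    qed
  qed
  show ?thesis unfolding embedding_def using inj ffun_G ffun_rel by (auto simp: inj_on_def inj_def)
qed

end

lemma bi_emb_cat: "comp_bi_emb_categorical UNIV Erel"
  unfolding comp_bi_emb_categorical_def
proof (intro allI impI)
  fix G R assume ces: "computable_eq_struct G R" and be: "bi_embeddable UNIV Erel G R"
  have eqG: "equiv G R" and crR: "computable_rel R"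
    using ces by (auto simp: computable_eq_struct_def eq_struct_def)
  obtain \<phi> \<psi> where phi: "embedding \<phi> UNIV Erel G R" and psi: "embedding \<psi> G R UNIV Erel"
    using be unfolding bi_embeddable_def by blast
  show "comp_bi_embeddable UNIV Erel G R"
    unfolding comp_bi_embeddable_def
    using ffun_comp[OF eqG crR phi psi] ffun_emb[OF eqG crR phi psi]
      gfun_comp[OF eqG crR phi psi] gfun_emb[OF eqG crR phi psi] by blast
qed

theorem corollary2p7:
  shows "\<exists>A E. computable_eq_struct A E \<and> comp_bi_emb_categorical A E \<and> \<not> comp_categorical A E"
  using ces_Erel bi_emb_cat not_cc by blast

end
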